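(* For a shift space $X\subseteq\mathscr{A}^\infty$ over a finite alphabet $\mathscr{A}$ the following conditions are equivalent: (i) there exists a descending sequence $X_1\supseteq X_2\supseteq\cdots$ of topologically mixing sofic shifts such that $X=\bigcap_{n=1}^\infty X_n$ and $\bar d^H(X,X_n)\to 0$ as $n\to\infty$; (ii) $\sigma(X)=X$ and $X$ has the $\bar d$-shadowing property; (iii) $X$ is chain mixing and $\bar d$-approachable.
   Context: $\mathscr{A}^\infty=\mathscr{A}^{\mathbb{N}_0}$, $\sigma$ the left shift; a shift space is a nonempty closed $\sigma$-invariant subset. $\mathcal{L}(X)$ is the set of finite words appearing in elements of $X$, $\mathcal{L}_n(X)$ those of length $n$. $X$ is topologically mixing if for all $u,w\in\mathcal L(X)$ there is $N$ such that for all $n\ge N$ there is $v$ with $|v|=n$ and $uvw\in\mathcal L(X)$; transitive if for all $u,w\in\mathcal L(X)$ there is $v$ with $uvw\in\mathcal L(X)$. A sofic shift is the set of label sequences of infinite paths in a finite edge-labelled directed graph. For $x,y\in\mathscr{A}^\infty$, $\bar d(x,y)=\limsup_{n\to\infty}\frac1n|\{0\le j<n:x_j\ne y_j\}|$; for nonempty $A,B\subseteq\mathscr{A}^\infty$, $\bar d^H(A,B)=\max\{\sup_{a\in A}\inf_{b\in B}\bar d(a,b),\sup_{b\in B}\inf_{a\in A}\bar d(a,b)\}$. The $n$-th Markov approximation $X^M_n$ of $X$ is the shift of finite type of all $x\in\mathscr{A}^\infty$ every subword of length $n+1$ of which lies in $\mathcal L_{n+1}(X)$ (so $\mathcal L_j(X^M_n)=\mathcal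 L_j(X)$ for $j\le n+1$). $X$ is $\bar d$-approachable if $\bar d^H(X^M_n,X)\to0$. $X$ is chain mixing (resp. chain transitive) if $X^M_n$ is topologically mixing (resp. transitive) for all but finitely many $n$. $X$ has the $\bar d$-shadowing property if for every $\varepsilon>0$ there is $N\in\mathbb N$ such that for every sequence $(w^{(j)})_{j\ge1}$ of words in $\mathcal L(X)$ with $|w^{(j)}|\ge N$ for all $j$ there is $x'\in X$ with $\bar d(w^{(1)}w^{(2)}w^{(3)}\cdots,x')<\varepsilon$. *)

theory Defs
  imports "HOL-Analysis.Analysis"
begin

text \<open>The topology on the full shift is the product of discrete topologies; a set X is
  closed iff every point all of whose prefixes are prefixes of points of X lies in X.\<close>

definition shift :: "(nat \<Rightarrow> 'a) \<Rightarrow> (nat \<Rightarrow> 'a)" where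
  "shift x = (\<lambda>i. x (Suc i))"

definition seq_closed :: "(nat \<Rightarrow> 'a) set \<Rightarrow> bool" where
  "seq_closed X \<longleftrightarrow> (\<forall>x. (\<forall>n. \<exists>y\<in>X. \<forall>i<n. y i = x i) \<longrightarrow> x \<in> X)"

definition shift_space :: "(nat \<Rightarrow> 'a) set \<Rightarrow> bool" where
  "shift_space X \<longleftrightarrow> X \<noteq> {} \<and> seq_closed X \<and> shift ` X \<subseteq> X"

definition occurs_in :: "'a list \<Rightarrow> (nat \<Rightarrow> 'a) \<Rightarrow> bool" where
  "occurs_in w x \<longleftrightarrow> (\<exists>i. w = map x [i..<i + length w])"

definition lang :: "(nat \<Rightarrow> 'a) set \<Rightarrow> 'a list set" where
  "lang X = {w. \<exists>x\<in>X. occurs_in w x}"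

definition top_mixing :: "(nat \<Rightarrow> 'a) set \<Rightarrow> bool" where
  "top_mixing X \<longleftrightarrow> (\<forall>u\<in>lang X. \<forall>w\<in>lang X. \<exists>N. \<forall>n\<ge>N.
      \<exists>v. length v = n \<and> u @ v @ w \<in> lang X)"

definition top_transitive :: "(nat \<Rightarrow> 'a) set \<Rightarrow> bool" where
  "top_transitive X \<longleftrightarrow> (\<forall>u\<in>lang X. \<forall>w\<in>lang X. \<exists>v. u @ v @ w \<in> lang X)"

text \<open>Sofic shift: label sequences of infinite paths in a finite edge-labelled
  directed graph (vertices taken from nat, edges (source, label, target)); required to be a shift space.\<close>
definition sofic :: "(nat \<Rightarrow> 'a) set \<Rightarrow> bool" where
  "sofic X \<longleftrightarrow> shift_space X \<and>
     (\<exists>E :: (nat \<times> 'a \<times> nat) set. finite E \<and>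
        X = {x. \<exists>p :: nat \<Rightarrow> nat. \<forall>i. (p i, x i, p (Suc i)) \<in> E})"

definition dbar :: "(nat \<Rightarrow> 'a) \<Rightarrow> (nat \<Rightarrow> 'a) \<Rightarrow> real" where
  "dbar x y = real_of_ereal
     (limsup (\<lambda>n. ereal (real (card {j. j < n \<and> x j \<noteq> y j}) / real n)))"

definition dbarH :: "(nat \<Rightarrow> 'a) set \<Rightarrow> (nat \<Rightarrow> 'a) set \<Rightarrow> real" where
  "dbarH A B = max (SUP a\<in>A. INF b\<in>B. dbar a b) (SUP b\<in>B. INF a\<in>A. dbar a b)"

definition markov :: "(nat \<Rightarrow> 'a) set \<Rightarrow> nat \<Rightarrow> (nat \<Rightarrow> 'a) set" where
  "markov X n = {x. \<forall>i. map x [i..<i + (n + 1)] \<in> lang X}"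

definition dbar_approachable :: "(nat \<Rightarrow> 'a) set \<Rightarrow> bool" where
  "dbar_approachable X \<longleftrightarrow> (\<lambda>n. dbarH (markov X n) X) \<longlonglongrightarrow> 0"

definition chain_mixing :: "(nat \<Rightarrow> 'a) set \<Rightarrow> bool" where
  "chain_mixing X \<longleftrightarrow> (\<forall>\<^sub>F n in sequentially. top_mixing (markov X n))"

definition chain_transitive :: "(nat \<Rightarrow> 'a) set \<Rightarrow> bool" where
  "chain_transitive X \<longleftrightarrow> (\<forall>\<^sub>F n in sequentially. top_transitive (markov X n))"

text \<open>Infinite concatenation w 0 w 1 w 2 ... (meaningful when all words are nonempty).\<close>
definition concat_inf :: "(nat \<Rightarrow> 'a list) \<Rightarrow> nat \<Rightarrow> 'a" where
  "concat_inf w i = (let j = (LEAST j. i < (\<Sum>k\<le>j. length (w k)))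
                     in w j ! (i - (\<Sum>k<j. length (w k))))"

definition dbar_shadowing :: "(nat \<Rightarrow> 'a) set \<Rightarrow> bool" where
  "dbar_shadowing X \<longleftrightarrow> (\<forall>\<epsilon>>0. \<exists>N::nat. N \<ge> 1 \<and>
     (\<forall>w :: nat \<Rightarrow> 'a list. (\<forall>j. w j \<in> lang X \<and> length (w j) \<ge> N) \<longrightarrow>
        (\<exists>x'\<in>X. dbar (concat_inf w) x' < \<epsilon>)))"

end

theory Submission
  imports Defs
begin


definition errc :: "(nat \<Rightarrow> 'a) \<Rightarrow> (nat \<Rightarrow> 'a) \<Rightarrow> nat \<Rightarrow> nat" where
  "errc x y n = card {j. j < n \<and> x j \<noteq> y j}"

lemma errc_le: "errc x y n \<le> n"
proof -
  have "{j. j < n \<and> x j \<noteq> y j} \<subseteq> {..<n}" by auto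
  then show ?thesis unfolding errc_def using card_mono[of "{..<n}"] by fastforce
qed

lemma errc_sym: "errc x y n = errc y x n"
  unfolding errc_def by metis

lemma errc_tri: "errc x z n \<le> errc x y n + errc y z n"
proof -
  have "{j. j < n \<and> x j \<noteq> z j} \<subseteq> {j. j < n \<and> x j \<noteq> y j} \<union> {j. j < n \<and> y j \<noteq> z j}" by auto
  then have "errc x z n \<le> card ({j. j < n \<and> x j \<noteq> y j} \<union> {j. j < n \<and> y j \<noteq> z j})"
    unfolding errc_def by (intro card_mono) auto
  also have "\<dots> \<le> errc x y n + errc y z n" unfolding errc_def by (rule card_Un_le)
  finally show ?thesis .
qed

lemma ratio_bounds: "0 \<le> real (errc x y n) / real n" "real (errc x y n) / real n \<le> 1"
  using errc_le[of x y n] by (auto simp: divide_le_eq_1)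

lemma dbar_alt: "dbar x y = real_of_ereal (limsup (\<lambda>n. ereal (real (errc x y n) / real n)))"
  unfolding dbar_def errc_def by simp

lemma limsup_ratio_bounds:
  "0 \<le> limsup (\<lambda>n. ereal (real (errc x y n) / real n))"
  "limsup (\<lambda>n. ereal (real (errc x y n) / real n)) \<le> 1"
proof -
  show "0 \<le> limsup (\<lambda>n. ereal (real (errc x y n) / real n))"
    by (rule le_Limsup) (auto simp: ratio_bounds)
  show "limsup (\<lambda>n. ereal (real (errc x y n) / real n)) \<le> 1"
    by (rule Limsup_bounded) (auto simp: ratio_bounds)
qed

lemma dbar_ereal: "ereal (dbar x y) = limsup (\<lambda>n. ereal (real (errc x y n) / real n))"
proof -
  note b = limsup_ratio_bounds[of x y]
  have "\<bar>limsup (\<lambda>n. ereal (real (errc x y n) / real n))\<bar> \<noteq> \<infinity>"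
    using b by auto
  then show ?thesis unfolding dbar_alt using ereal_real by simp
qed

lemma dbar_nonneg: "0 \<le> dbar x y"
proof -
  have "ereal 0 \<le> ereal (dbar x y)" using limsup_ratio_bounds(1)[of x y] unfolding dbar_ereal by (simp add: zero_ereal_def)
  then show ?thesis by simp
qed

lemma dbar_le1: "dbar x y \<le> 1"
proof -
  have "ereal (dbar x y) \<le> ereal 1" using limsup_ratio_bounds(2)[of x y] unfolding dbar_ereal by (simp add: one_ereal_def)
  then show ?thesis by simp
qed

lemma dbar_sym: "dbar x y = dbar y x"
  unfolding dbar_alt errc_sym[of x y] ..

lemma dbar_lessD:
  assumes "dbar x y < c"
  shows "eventually (\<lambda>n. real (errc x y n) / real n < c) sequentially"
proof -
  have "limsup (\<lambda>n. ereal (real (errc x y n) / real n)) < ereal c"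
    using assms unfolding dbar_ereal[symmetric] by simp
  from Limsup_lessD[OF this] show ?thesis by simp
qed

lemma dbar_leI:
  assumes "eventually (\<lambda>n. real (errc x y n) / real n \<le> c) sequentially"
  shows "dbar x y \<le> c"
proof -
  have "limsup (\<lambda>n. ereal (real (errc x y n) / real n)) \<le> ereal c"
    by (rule Limsup_bounded) (use assms in \<open>auto elim: eventually_mono\<close>)
  then have "ereal (dbar x y) \<le> ereal c" unfolding dbar_ereal .
  then show ?thesis by simp
qed

lemma dbar_self: "dbar x x = 0"
proof -
  have "dbar x x \<le> 0" by (rule dbar_leI) (auto simp: errc_def)
  then show ?thesis using dbar_nonneg[of x x] by simp
qed

lemma ratio_tri: "real (errc x z n) / real n \<le> real (errc x y n) / real n + real (errc y z n) / real n"
proof -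
  have "real (errc x z n) \<le> real (errc x y n) + real (errc y z n)"
    using errc_tri[of x z n y] by linarith
  then have "real (errc x z n) / real n \<le> (real (errc x y n) + real (errc y z n)) / real n"
    by (rule divide_right_mono) simp
  then show ?thesis by (simp only: add_divide_distrib)
qed

lemma dbar_tri: "dbar x z \<le> dbar x y + dbar y z"
proof -
  have "dbar x z \<le> dbar x y + dbar y z + d" if d: "d > 0" for d
  proof (rule dbar_leI)
    have "eventually (\<lambda>n. real (errc x y n) / real n < dbar x y + d/2) sequentially"
      by (rule dbar_lessD) (use d in auto)
    moreover have "eventually (\<lambda>n. real (errc y z n) / real n < dbar y z + d/2) sequentially"
      by (rule dbar_lessD) (use d in auto)
    ultimately show "eventually (\<lambda>n. real (errc x z n) / real n \<le> dbar x y + dbar y z + d) sequentially"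
    proof eventually_elim
      case (elim n)
      have "real (errc x z n) / real n \<le> real (errc x y n) / real n + real (errc y z n) / real n"
        by (rule ratio_tri)
      then show ?case using elim by linarith
    qed
  qed
  then show ?thesis
    by (rule field_le_epsilon) auto
qed



lemma shift_pow: "(shift ^^ i) x = (\<lambda>j. x (i + j))"
  by (induction i arbitrary: x) (auto simp: shift_def funpow_Suc_right)

lemma shift_space_shift_pow: "shift_space X \<Longrightarrow> x \<in> X \<Longrightarrow> (\<lambda>j. x (i + j)) \<in> X"
proof (induction i)
  case 0 then show ?case by simp
next
  case (Suc i)
  then have "shift (\<lambda>j. x (i + j)) \<in> X" unfolding shift_space_def by auto
  then show ?case by (simp add: shift_def)
qed

lemma map_upt_eq: "map f [a..<b] = map g [a..<b] \<longleftrightarrow> (\<forall>j. a \<le> j \<and> j < b \<longrightarrow> f j = g j)"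
  by (auto simp: map_eq_conv)

lemma map_upt_shift: "map x [i..<i + n] = map (\<lambda>j. x (i + j)) [0..<n]"
  by (rule nth_equalityI) auto

lemma lang_prefix_point:
  assumes "shift_space X" "w \<in> lang X"
  shows "\<exists>y\<in>X. w = map y [0..<length w]"
proof -
  obtain x i where x: "x \<in> X" "w = map x [i..<i + length w]"
    using assms(2) unfolding lang_def occurs_in_def by auto
  have "(\<lambda>j. x (i + j)) \<in> X" by (rule shift_space_shift_pow[OF assms(1) x(1)])
  moreover have "map x [i..<i + length w] = map (\<lambda>j. x (i + j)) [0..<length w]"
    by (rule map_upt_shift)
  ultimately show ?thesis using x(2) by auto
qed

lemma lang_point_word: "x \<in> X \<Longrightarrow> map x [i..<i + n] \<in> lang X"
  unfolding lang_def occurs_in_def by force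

lemma lang_prefix_word: "x \<in> X \<Longrightarrow> map x [0..<n] \<in> lang X"
  using lang_point_word[of x X 0 n] by simp

lemma lang_mono: "X \<subseteq> Y \<Longrightarrow> lang X \<subseteq> lang Y"
  unfolding lang_def by auto

lemma lang_infix:
  assumes "u @ v @ w \<in> lang X"
  shows "v \<in> lang X"
proof -
  obtain x i where x: "x \<in> X" "u @ v @ w = map x [i..<i + length (u @ v @ w)]"
    using assms unfolding lang_def occurs_in_def by blast
  have "v = map x [i + length u..<i + length u + length v]"
  proof (rule nth_equalityI)
    fix k assume "k < length v"
    then have "v ! k = (u @ v @ w) ! (length u + k)" by (simp add: nth_append)
    also have "\<dots> = map x [i..<i + length (u @ v @ w)] ! (length u + k)"
      by (simp only: x(2)[symmetric])
    also have "\<dots> = x (i + (length u + k))" using \<open>k < length v\<close> by simp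
    finally show "v ! k = map x [i + length u..<i + length u + length v] ! k"
      using \<open>k < length v\<close> by (simp add: add.assoc)
  qed simp
  then show ?thesis using x(1) lang_point_word by metis
qed

lemma lang_prefix: "u @ v \<in> lang X \<Longrightarrow> u \<in> lang X"
  using lang_infix[of "[]" u v X] by simp

lemma lang_suffix: "u @ v \<in> lang X \<Longrightarrow> v \<in> lang X"
  using lang_infix[of u v "[]" X] by simp

lemma closed_from_prefixes:
  assumes "shift_space X" "\<And>k. map x [0..<k] \<in> lang X"
  shows "x \<in> X"
proof -
  have "seq_closed X" using assms(1) unfolding shift_space_def by auto
  moreover have "\<exists>y\<in>X. \<forall>i<n. y i = x i" for n
  proof -
    obtain y where "y \<in> X" "map x [0..<n] = map y [0..<length (map x [0..<n])]"
      using lang_prefix_point[OF assms(1) assms(2)[of n]] by blast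
    then show ?thesis by (auto simp: map_upt_eq)
  qed
  ultimately show ?thesis unfolding seq_closed_def by blast
qed



section \<open>Infinite concatenation\<close>

lemma concat_inf_block:
  assumes pos: "\<And>k. length (w k) \<ge> 1" and r: "r < length (w j)"
  shows "concat_inf w ((\<Sum>k<j. length (w k)) + r) = w j ! r"
proof -
  define S where "S j = (\<Sum>k<j. length (w k))" for j
  have S_Suc: "S (Suc j) = S j + length (w j)" for j unfolding S_def by simp
  have S_mono: "S a \<le> S b" if "a \<le> b" for a b
    unfolding S_def by (rule sum_mono2) (use that in auto)
  have le: "(\<Sum>k\<le>j'. length (w k)) = S (Suc j')" for j'
    unfolding S_def by (simp add: lessThan_Suc_atMost)
  have least: "(LEAST j'. S j + r < (\<Sum>k\<le>j'. length (w k))) = j"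
    unfolding le
  proof (rule Least_equality)
    show "S j + r < S (Suc j)" using r S_Suc by simp
    fix y assume "S j + r < S (Suc y)"
    show "j \<le> y"
    proof (rule ccontr)
      assume "\<not> j \<le> y"
      then have "Suc y \<le> j" by simp
      then have "S (Suc y) \<le> S j" by (rule S_mono)
      with \<open>S j + r < S (Suc y)\<close> show False by simp
    qed
  qed
  show ?thesis unfolding concat_inf_def Let_def S_def[symmetric] least by simp
qed

lemma concat_inf_const:
  assumes len: "\<And>k. length (w k) = L" and L: "L \<ge> 1"
  shows "concat_inf w i = w (i div L) ! (i mod L)"
proof -
  have "(\<Sum>k<i div L. length (w k)) = i div L * L" by (simp add: len)
  moreover have "i = i div L * L + i mod L" by simp
  moreover have "i mod L < length (w (i div L))" using L len by simp
  ultimately show ?thesis using concat_inf_block[of w "i mod L" "i div L"] len L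
    by (metis)
qed

section \<open>Markov approximations\<close>

lemma markovD: "x \<in> markov X n \<Longrightarrow> map x [i..<i + (n + 1)] \<in> lang X"
  unfolding markov_def by blast

lemma markovI: "(\<And>i. map x [i..<i + (n + 1)] \<in> lang X) \<Longrightarrow> x \<in> markov X n"
  unfolding markov_def by blast

lemma subset_markov: "X \<subseteq> markov X n"
  unfolding markov_def using lang_point_word by blast

lemma markov_glue:
  assumes x: "x \<in> markov X n" and z: "z \<in> markov X n"
    and agree: "\<And>t. t < n \<Longrightarrow> x (p + t) = z (q + t)"
  shows "(\<lambda>i. if i < p + n then x i else z (i - p + q)) \<in> markov X n"
proof (rule markovI)
  fix i
  let ?y = "\<lambda>i. if i < p + n then x i else z (i - p + q)"
  show "map ?y [i..<i + (n + 1)] \<in> lang X"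
  proof (cases "i + 1 \<le> p")
    case True
    then have eq: "map ?y [i..<i + (n + 1)] = map x [i..<i + (n + 1)]"
      by (auto simp: map_upt_eq simp del: upt_Suc)
    show ?thesis unfolding eq by (rule markovD[OF x])
  next
    case False
    then have ip: "p \<le> i" by simp
    have eq: "map ?y [i..<i + (n + 1)] = map z [i - p + q..<i - p + q + (n + 1)]"
    proof (rule nth_equalityI)
      fix t assume "t < length (map ?y [i..<i + (n + 1)])"
      then have t: "t < n + 1" by simp
      have "?y (i + t) = z (i - p + q + t)"
      proof (cases "i + t < p + n")
        case True
        then have "i + t - p < n" using ip by simp
        from agree[OF this] have "x (p + (i + t - p)) = z (q + (i + t - p))" .
        then show ?thesis using True ip by (simp add: algebra_simps)
      next
        case False
        then show ?thesis using ip by (simp add: algebra_simps)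
      qed
      moreover have "map ?y [i..<i + (n + 1)] ! t = ?y (i + t)"
        using t by (simp del: upt_Suc add: nth_map_upt)
      moreover have "map z [i - p + q..<i - p + q + (n + 1)] ! t = z (i - p + q + t)"
        using t by (simp del: upt_Suc add: nth_map_upt)
      ultimately show "map ?y [i..<i + (n + 1)] ! t = map z [i - p + q..<i - p + q + (n + 1)] ! t"
        by simp
    qed (simp del: upt_Suc)
    show ?thesis unfolding eq by (rule markovD[OF z])
  qed
qed

lemma markov_shift_space:
  assumes "shift_space X"
  shows "shift_space (markov X n)"
proof -
  have ne: "markov X n \<noteq> {}" using assms subset_markov[of X n] unfolding shift_space_def by blast
  have sh: "shift ` markov X n \<subseteq> markov X n"
  proof
    fix y assume "y \<in> shift ` markov X n"
    then obtain x where x: "x \<in> markov X n" "y = shift x" by blast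
    have eq: "map y [i..<i + (n + 1)] = map x [Suc i..<Suc i + (n + 1)]" for i
      using x(2) by (intro nth_equalityI) (simp_all del: upt_Suc add: shift_def nth_map_upt)
    show "y \<in> markov X n"
      by (rule markovI) (unfold eq, rule markovD[OF x(1)])
  qed
  have cl: "seq_closed (markov X n)"
    unfolding seq_closed_def
  proof (intro allI impI)
    fix x assume h: "\<forall>m. \<exists>y\<in>markov X n. \<forall>i<m. y i = x i"
    show "x \<in> markov X n"
    proof (rule markovI)
      fix i
      obtain y where y: "y \<in> markov X n" "\<forall>j<i + (n + 1). y j = x j" using h by blast
      have eq: "map x [i..<i + (n + 1)] = map y [i..<i + (n + 1)]" using y(2) by (auto simp: map_upt_eq simp del: upt_Suc)
      show "map x [i..<i + (n + 1)] \<in> lang X" unfolding eq by (rule markovD[OF y(1)])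
    qed
  qed
  show ?thesis unfolding shift_space_def using ne sh cl by blast
qed

lemma surj_iter:
  assumes "shift ` X = X" "x \<in> X"
  shows "\<exists>y\<in>X. \<forall>i. y (j + i) = x i"
proof (induction j)
  case 0 then show ?case using assms(2) by auto
next
  case (Suc j)
  then obtain y where y: "y \<in> X" "\<forall>i. y (j + i) = x i" by blast
  then obtain y' where y': "y' \<in> X" "shift y' = y" using assms(1) by (metis imageE)
  have "y' (Suc j + i) = x i" for i
  proof -
    have "y' (Suc j + i) = shift y' (j + i)" by (simp add: shift_def)
    also have "\<dots> = x i" using y(2) y'(2) by simp
    finally show ?thesis .
  qed
  then show ?case using y' by blast
qed

lemma markov_left_ext:
  assumes X: "shift_space X" "shift ` X = X" and x: "x \<in> markov X n"
  shows "\<exists>y\<in>markov X n. \<forall>i. y (Suc i) = x i"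
proof -
  have "map x [0..<0 + (n + 1)] \<in> lang X" by (rule markovD[OF x])
  then have "map x [0..<n + 1] \<in> lang X" by simp
  then obtain b0 where b0: "b0 \<in> X" "map x [0..<n + 1] = map b0 [0..<n + 1]"
    using lang_prefix_point[OF X(1)] by fastforce
  obtain b where b: "b \<in> X" "\<forall>i. b (1 + i) = b0 i" using surj_iter[OF X(2) b0(1), of 1] by blast
  have bx: "b (Suc t) = x t" if "t < n + 1" for t
    using b(2) b0(2) that by (auto simp: map_upt_eq simp del: upt_Suc)
  define y where "y = (\<lambda>i. if i < 1 + n then b i else x (i - 1 + 0))"
  have "y \<in> markov X n" unfolding y_def
    by (rule markov_glue) (use b(1) subset_markov x bx in auto)
  moreover have "\<forall>i. y (Suc i) = x i"
    using bx by (auto simp: y_def)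
  ultimately show ?thesis by blast
qed

lemma markov_left_iter:
  assumes X: "shift_space X" "shift ` X = X" and x: "x \<in> markov X n"
  shows "\<exists>y\<in>markov X n. \<forall>i. y (j + i) = x i"
proof (induction j)
  case 0 then show ?case using x by auto
next
  case (Suc j)
  then obtain y where y: "y \<in> markov X n" "\<forall>i. y (j + i) = x i" by blast
  obtain y' where y': "y' \<in> markov X n" "\<forall>i. y' (Suc i) = y i" using markov_left_ext[OF X y(1)] by blast
  have "y' (Suc j + i) = x i" for i using y y' by simp
  then show ?case using y' by blast
qed



lemma dbarH_sym: "dbarH A B = dbarH B A"
proof -
  have "dbarH A B = max (SUP a\<in>A. INF b\<in>B. dbar b a) (SUP b\<in>B. INF a\<in>A. dbar b a)"
    unfolding dbarH_def by (simp add: dbar_sym[of _ "_::nat \<Rightarrow> _"])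
  then show ?thesis unfolding dbarH_def by (simp add: max.commute)
qed

lemma markov_sofic:
  fixes X :: "(nat \<Rightarrow> 'a::finite) set"
  assumes "shift_space X"
  shows "sofic (markov X n)"
proof -
  define E where "E = (\<lambda>W::'a list. (to_nat (take n W), hd W, to_nat (drop 1 W))) ` {W. length W = n + 1 \<and> W \<in> lang X}"
  have fin: "finite E"
  proof -
    have "finite {W::'a list. set W \<subseteq> UNIV \<and> length W = n + 1}"
      by (rule finite_lists_length_eq) simp
    then have "finite {W::'a list. length W = n + 1 \<and> W \<in> lang X}"
      by (rule rev_finite_subset) auto
    then show ?thesis unfolding E_def by simp
  qed
  have eq: "markov X n = {x. \<exists>p :: nat \<Rightarrow> nat. \<forall>i. (p i, x i, p (Suc i)) \<in> E}"
  proof (intro equalityI subsetI CollectI)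
    fix x assume x: "x \<in> markov X n"
    define p where "p i = to_nat (map x [i..<i + n])" for i
    have "(p i, x i, p (Suc i)) \<in> E" for i
    proof -
      let ?W = "map x [i..<i + (n + 1)]"
      have W: "length ?W = n + 1 \<and> ?W \<in> lang X" using markovD[OF x] by simp
      have "take n ?W = map x [i..<i + n]" by (simp add: take_map take_upt)
      moreover have "hd ?W = x i" by (simp add: hd_map del: upt_Suc)
      moreover have "drop 1 ?W = map x [Suc i..<Suc i + n]" by (simp add: drop_map del: upt_Suc)
      ultimately have "(p i, x i, p (Suc i)) = (to_nat (take n ?W), hd ?W, to_nat (drop 1 ?W))"
        unfolding p_def by simp
      then show ?thesis unfolding E_def using W by blast
    qed
    then show "\<exists>p :: nat \<Rightarrow> nat. \<forall>i. (p i, x i, p (Suc i)) \<in> E" by blast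
  next
    fix x assume "x \<in> {x. \<exists>p :: nat \<Rightarrow> nat. \<forall>i. (p i, x i, p (Suc i)) \<in> E}"
    then obtain p :: "nat \<Rightarrow> nat" where p: "\<forall>i. (p i, x i, p (Suc i)) \<in> E" by blast
    have "\<forall>i. \<exists>W. length W = n + 1 \<and> W \<in> lang X \<and> to_nat (take n W) = p i \<and> hd W = x i
               \<and> to_nat (drop 1 W) = p (Suc i)"
    proof
      fix i
      have "(p i, x i, p (Suc i)) \<in> E" using p by blast
      then obtain W where "W \<in> {W. length W = n + 1 \<and> W \<in> lang X}"
        "(p i, x i, p (Suc i)) = (to_nat (take n W), hd W, to_nat (drop 1 W))"
        unfolding E_def by (rule imageE)
      then show "\<exists>W. length W = n + 1 \<and> W \<in> lang X \<and> to_nat (take n W) = p i \<and> hd W = x i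
               \<and> to_nat (drop 1 W) = p (Suc i)" by auto
    qed
    from choice[OF this] obtain W where WW: "\<forall>i. length (W i) = n + 1 \<and> W i \<in> lang X \<and> to_nat (take n (W i)) = p i \<and> hd (W i) = x i
               \<and> to_nat (drop 1 (W i)) = p (Suc i)" by blast
    have W: "\<And>i. length (W i) = n + 1" "\<And>i. W i \<in> lang X"
      "\<And>i. to_nat (take n (W i)) = p i" "\<And>i. hd (W i) = x i" "\<And>i. to_nat (drop 1 (W i)) = p (Suc i)"
      using WW by blast+
    have link: "drop (Suc 0) (W i) = take n (W (Suc i))" for i
    proof -
      have "to_nat (drop (Suc 0) (W i)) = to_nat (take n (W (Suc i)))"
        using W(3)[of "Suc i"] W(5)[of i] by simp
      then show ?thesis by (rule injD[OF inj_to_nat])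
    qed
    have nth: "W i ! t = x (i + t)" if "t \<le> n" for t i
      using that
    proof (induction t arbitrary: i)
      case 0
      have "W i \<noteq> []" using W(1)[of i] by auto
      then show ?case using W(4)[of i] by (simp add: hd_conv_nth)
    next
      case (Suc t)
      have "W i ! Suc t = drop 1 (W i) ! t" using Suc.prems W(1)[of i] by simp
      also have "\<dots> = take n (W (Suc i)) ! t" by (simp add: link)
      also have "\<dots> = W (Suc i) ! t" using Suc.prems by simp
      also have "\<dots> = x (Suc i + t)" using Suc.IH Suc.prems by simp
      finally show ?case by simp
    qed
    show "x \<in> markov X n"
    proof (rule markovI)
      fix i
      have "W i = map x [i..<i + (n + 1)]"
        by (rule nth_equalityI) (simp_all add: W(1) nth del: upt_Suc)
      then show "map x [i..<i + (n + 1)] \<in> lang X" using W(2) by metis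
    qed
  qed
  show ?thesis unfolding sofic_def using markov_shift_space[OF assms] fin eq by blast
qed

lemma markov_dec: "markov X (Suc m) \<subseteq> markov X m"
proof
  fix x assume x: "x \<in> markov X (Suc m)"
  show "x \<in> markov X m"
  proof (rule markovI)
    fix i
    have "map x [i..<i + (Suc m + 1)] = map x [i..<i + (m + 1)] @ [x (i + (m + 1))]" by simp
    then show "map x [i..<i + (m + 1)] \<in> lang X" using markovD[OF x, of i] lang_prefix by metis
  qed
qed

lemma markov_Inter:
  assumes "shift_space X"
  shows "X = (\<Inter>m. markov X (m + k))"
proof (intro equalityI subsetI)
  fix x assume "x \<in> X" then show "x \<in> (\<Inter>m. markov X (m + k))" using subset_markov by blast
next
  fix x assume x: "x \<in> (\<Inter>m. markov X (m + k))"
  show "x \<in> X"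
  proof (rule closed_from_prefixes[OF assms])
    fix j
    have "map x [0..<0 + (j + k + 1)] \<in> lang X" using x markovD by blast
    moreover have "[0..<j + (k + 1)] = [0..<j] @ [j..<j + (k + 1)]"
      by (rule upt_add_eq_append) simp
    then have "map x [0..<0 + (j + k + 1)] = map x [0..<j] @ map x [j..<j + (k + 1)]"
      by (simp only: add_0 add.assoc map_append)
    ultimately show "map x [0..<j] \<in> lang X" using lang_prefix by metis
  qed
qed

lemma iii_imp_i:
  fixes X :: "(nat \<Rightarrow> 'a::finite) set"
  assumes X: "shift_space X" and cm: "chain_mixing X" and da: "dbar_approachable X"
  shows "\<exists>Xs :: nat \<Rightarrow> (nat \<Rightarrow> 'a) set.
             (\<forall>n. sofic (Xs n) \<and> top_mixing (Xs n)) \<and> decseq Xs \<and>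
             X = (\<Inter>n. Xs n) \<and> (\<lambda>n. dbarH X (Xs n)) \<longlonglongrightarrow> 0"
proof -
  obtain k where k: "\<And>n. n \<ge> k \<Longrightarrow> top_mixing (markov X n)"
    using cm unfolding chain_mixing_def eventually_sequentially by blast
  define Xs where "Xs m = markov X (m + k)" for m
  have "\<forall>n. sofic (Xs n) \<and> top_mixing (Xs n)"
    unfolding Xs_def using k markov_sofic[OF X] by simp
  moreover have "decseq Xs"
    by (rule decseq_SucI) (simp add: Xs_def markov_dec)
  moreover have "X = (\<Inter>n. Xs n)" unfolding Xs_def by (rule markov_Inter[OF X])
  moreover have "(\<lambda>n. dbarH X (Xs n)) \<longlonglongrightarrow> 0"
  proof -
    have "(\<lambda>n. dbarH (markov X n) X) \<longlonglongrightarrow> 0" using da unfolding dbar_approachable_def .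
    then have "(\<lambda>n. dbarH (markov X (n + k)) X) \<longlonglongrightarrow> 0" by (rule LIMSEQ_ignore_initial_segment)
    then show ?thesis unfolding Xs_def by (subst dbarH_sym)
  qed
  ultimately show ?thesis by blast
qed



lemma bdd_below_dbar: "bdd_below ((\<lambda>b. dbar a b) ` B)"
  by (rule bdd_belowI[of _ 0]) (auto simp: dbar_nonneg)

lemma bdd_below_dbar': "bdd_below ((\<lambda>a. dbar a b) ` A)"
  by (rule bdd_belowI[of _ 0]) (auto simp: dbar_nonneg)

lemma bdd_above_INF1: "B \<noteq> {} \<Longrightarrow> bdd_above ((\<lambda>a. INF b\<in>B. dbar a b) ` A)"
proof (rule bdd_aboveI[of _ 1])
  fix y assume "B \<noteq> {}" "y \<in> (\<lambda>a. INF b\<in>B. dbar a b) ` A"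
  then obtain a b where "y = (INF b\<in>B. dbar a b)" "b \<in> B" by blast
  then have "y \<le> dbar a b" using cINF_lower[OF bdd_below_dbar] by blast
  then show "y \<le> 1" using dbar_le1[of a b] by simp
qed

lemma bdd_above_INF2: "A \<noteq> {} \<Longrightarrow> bdd_above ((\<lambda>b. INF a\<in>A. dbar a b) ` B)"
proof (rule bdd_aboveI[of _ 1])
  fix y assume "A \<noteq> {}" "y \<in> (\<lambda>b. INF a\<in>A. dbar a b) ` B"
  then obtain a b where "y = (INF a\<in>A. dbar a b)" "a \<in> A" by blast
  then have "y \<le> dbar a b" using cINF_lower[OF bdd_below_dbar'] by blast
  then show "y \<le> 1" using dbar_le1[of a b] by simp
qed

lemma dbarH_le:
  assumes ne: "A \<noteq> {}" "B \<noteq> {}"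
    and h1: "\<And>a. a \<in> A \<Longrightarrow> \<exists>b\<in>B. dbar a b \<le> c"
    and h2: "\<And>b. b \<in> B \<Longrightarrow> \<exists>a\<in>A. dbar a b \<le> c"
  shows "dbarH A B \<le> c"
proof -
  have "(SUP a\<in>A. INF b\<in>B. dbar a b) \<le> c"
  proof (rule cSUP_least[OF ne(1)])
    fix a assume "a \<in> A"
    then obtain b where "b \<in> B" "dbar a b \<le> c" using h1 by blast
    then show "(INF b\<in>B. dbar a b) \<le> c" using cINF_lower[OF bdd_below_dbar] order.trans by blast
  qed
  moreover have "(SUP b\<in>B. INF a\<in>A. dbar a b) \<le> c"
  proof (rule cSUP_least[OF ne(2)])
    fix b assume "b \<in> B"
    then obtain a where "a \<in> A" "dbar a b \<le> c" using h2 by blast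
    then show "(INF a\<in>A. dbar a b) \<le> c" using cINF_lower[OF bdd_below_dbar'] order.trans by blast
  qed
  ultimately show ?thesis unfolding dbarH_def by simp
qed

lemma dbarH_nonneg:
  assumes ne: "A \<noteq> {}" "B \<noteq> {}"
  shows "0 \<le> dbarH A B"
proof -
  obtain a where a: "a \<in> A" using ne by blast
  have "0 \<le> (INF b\<in>B. dbar a b)" by (rule cINF_greatest[OF ne(2)]) (simp add: dbar_nonneg)
  also have "\<dots> \<le> (SUP a\<in>A. INF b\<in>B. dbar a b)" by (rule cSUP_upper[OF a bdd_above_INF1[OF ne(2)]])
  finally show ?thesis unfolding dbarH_def by simp
qed

lemma dbarH_lessD:
  assumes ne: "A \<noteq> {}" and b: "b \<in> B" and lt: "dbarH A B < c"
  shows "\<exists>a\<in>A. dbar a b < c"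
proof -
  have "(INF a\<in>A. dbar a b) \<le> (SUP b\<in>B. INF a\<in>A. dbar a b)"
    by (rule cSUP_upper[OF b bdd_above_INF2[OF ne]])
  also have "\<dots> \<le> dbarH A B" unfolding dbarH_def by simp
  finally have "(INF a\<in>A. dbar a b) < c" using lt by simp
  then show ?thesis using cINF_less_iff[OF ne bdd_below_dbar'] by blast
qed

lemma shadowing_approachable:
  assumes X: "shift_space X" and sh: "dbar_shadowing X"
  shows "dbar_approachable X"
  unfolding dbar_approachable_def
proof (rule LIMSEQ_I)
  fix r :: real assume r: "r > 0"
  obtain N :: nat where N: "N \<ge> 1" and NN: "\<And>w. (\<forall>j. w j \<in> lang X \<and> length (w j) \<ge> N) \<Longrightarrow>
      \<exists>x'\<in>X. dbar (concat_inf w) x' < r / 2"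
    using sh r unfolding dbar_shadowing_def by (meson half_gt_zero)
  have Xne: "X \<noteq> {}" using X unfolding shift_space_def by blast
  have "norm (dbarH (markov X n) X - 0) < r" if n: "n \<ge> N" for n
  proof -
    have Mne: "markov X n \<noteq> {}" using Xne subset_markov by blast
    have "dbarH (markov X n) X \<le> r / 2"
    proof (rule dbarH_le[OF Mne Xne])
      fix x assume x: "x \<in> markov X n"
      define w where "w j = map x [j * N..<j * N + N]" for j
      have "w j \<in> lang X \<and> length (w j) \<ge> N" for j
      proof -
        have "[j * N..<(j * N + N) + (n + 1 - N)] = [j * N..<j * N + N] @ [j * N + N..<(j * N + N) + (n + 1 - N)]"
          by (rule upt_add_eq_append) simp
        moreover have "(j * N + N) + (n + 1 - N) = j * N + (n + 1)" using n by simp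
        ultimately have "map x [j * N..<j * N + (n + 1)] = w j @ map x [j * N + N..<j * N + (n + 1)]"
          unfolding w_def by (metis map_append)
        then have "w j \<in> lang X" using markovD[OF x, of "j * N"] lang_prefix by metis
        then show ?thesis unfolding w_def by simp
      qed
      then obtain x' where x': "x' \<in> X" "dbar (concat_inf w) x' < r / 2" using NN by blast
      have cw: "concat_inf w = x"
      proof
        fix i
        have "concat_inf w i = w (i div N) ! (i mod N)"
          by (rule concat_inf_const) (use N in \<open>simp_all add: w_def\<close>)
        also have "\<dots> = x (i div N * N + i mod N)" unfolding w_def
        proof -
          have "i mod N < N" using N by simp
          have "[i div N * N..<i div N * N + N] ! (i mod N) = i div N * N + i mod N"
            by (rule nth_upt) (use \<open>i mod N < N\<close> in \<open>simp only: add_less_cancel_left\<close>)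
          then show "map x [i div N * N..<i div N * N + N] ! (i mod N) = x (i div N * N + i mod N)"
            using \<open>i mod N < N\<close> by simp
        qed
        also have "\<dots> = x i" by simp
        finally show "concat_inf w i = x i" .
      qed
      show "\<exists>b\<in>X. dbar x b \<le> r / 2" using x'(1) x'(2)[unfolded cw] by (intro bexI[of _ x']) auto
    next
      fix b assume "b \<in> X"
      then show "\<exists>a\<in>markov X n. dbar a b \<le> r / 2" using subset_markov dbar_self r
        by (metis in_mono less_eq_real_def half_gt_zero)
    qed
    moreover have "0 \<le> dbarH (markov X n) X" by (rule dbarH_nonneg[OF Mne Xne])
    ultimately show ?thesis using r by simp
  qed
  then show "\<exists>no. \<forall>n\<ge>no. norm (dbarH (markov X n) X - 0) < r" by blast
qed



definition gd :: "(nat \<Rightarrow> 'a) \<Rightarrow> (nat \<Rightarrow> 'a) \<Rightarrow> nat \<Rightarrow> nat \<Rightarrow> bool" where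
  "gd z x n i \<longleftrightarrow> (\<forall>t<n. z (i + t) = x (i + t))"

lemma card_shift_le:
  fixes T t :: nat
  shows "card {i. i < T \<and> P (i + t)} \<le> card {j. j < T + t \<and> P j}"
proof (rule card_inj_on_le[of "\<lambda>i. i + t"])
  show "inj_on (\<lambda>i. i + t) {i. i < T \<and> P (i + t)}" by (auto simp: inj_on_def)
  show "(\<lambda>i. i + t) ` {i. i < T \<and> P (i + t)} \<subseteq> {j. j < T + t \<and> P j}" by auto
qed simp

lemma card_mono_T: "(T::nat) \<le> T' \<Longrightarrow> card {i. i < T \<and> P i} \<le> card {i. i < T' \<and> P i}"
  by (rule card_mono) auto

lemma bad_le_errc: "card {i. i < T \<and> \<not> gd z x n i} \<le> n * errc z x (T + n)"
proof -
  have "{i. i < T \<and> \<not> gd z x n i} \<subseteq> (\<Union>t\<in>{..<n}. {i. i < T \<and> z (i + t) \<noteq> x (i + t)})"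
    unfolding gd_def by auto
  then have "card {i. i < T \<and> \<not> gd z x n i} \<le> card (\<Union>t\<in>{..<n}. {i. i < T \<and> z (i + t) \<noteq> x (i + t)})"
    by (intro card_mono) auto
  also have "\<dots> \<le> (\<Sum>t\<in>{..<n}. card {i. i < T \<and> z (i + t) \<noteq> x (i + t)})"
    by (rule card_UN_le) simp
  also have "\<dots> \<le> (\<Sum>t\<in>{..<n}. errc z x (T + n))"
  proof (rule sum_mono)
    fix t assume "t \<in> {..<n}"
    then have "card {i. i < T \<and> z (i + t) \<noteq> x (i + t)} \<le> card {j. j < T + t \<and> z j \<noteq> x j}"
      using card_shift_le[of T "\<lambda>j. z j \<noteq> x j" t] by simp
    also have "\<dots> \<le> card {j. j < T + n \<and> z j \<noteq> x j}"
      using \<open>t \<in> {..<n}\<close> by (intro card_mono_T) simp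
    finally show "card {i. i < T \<and> z (i + t) \<noteq> x (i + t)} \<le> errc z x (T + n)"
      unfolding errc_def .
  qed
  also have "\<dots> = n * errc z x (T + n)" by simp
  finally show ?thesis .
qed

lemma bad_bound:
  assumes "dbar z x < e"
  shows "\<exists>T0. \<forall>T\<ge>T0. real (card {i. i < T \<and> \<not> gd z x n i}) \<le> real n * e * real (T + n)"
proof -
  obtain M0 where M0: "\<And>m. m \<ge> M0 \<Longrightarrow> real (errc z x m) / real m < e"
    using dbar_lessD[OF assms] unfolding eventually_sequentially by blast
  have "real (card {i. i < T \<and> \<not> gd z x n i}) \<le> real n * e * real (T + n)" if T: "T \<ge> M0 + 1" for T
  proof -
    have pos: "real (T + n) > 0" using T by simp
    have "real (errc z x (T + n)) / real (T + n) < e" using M0[of "T + n"] T by linarith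
    then have "real (errc z x (T + n)) < e * real (T + n)" using pos by (simp add: divide_less_eq)
    then have "real n * real (errc z x (T + n)) \<le> real n * (e * real (T + n))"
      by (intro mult_left_mono) auto
    moreover have "real (card {i. i < T \<and> \<not> gd z x n i}) \<le> real n * real (errc z x (T + n))"
      using of_nat_mono[OF bad_le_errc[of T z x n], where 'a=real] by simp
    ultimately show ?thesis by (simp add: mult.assoc)
  qed
  then show ?thesis by blast
qed

lemma good_in_set:
  assumes d: "dbar z x < 1 / (8 * real n)" and n: "n \<ge> 1"
    and dens: "\<And>T. real (card {i. i < T \<and> i \<in> S}) \<ge> real T / 4 - C"
  shows "\<exists>i\<ge>I. i \<in> S \<and> gd z x n i"
proof (rule ccontr)
  assume "\<not> ?thesis"
  then have nogood: "\<And>i. i \<ge> I \<Longrightarrow> i \<in> S \<Longrightarrow> \<not> gd z x n i" by blast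
  obtain T0 where T0: "\<And>T. T \<ge> T0 \<Longrightarrow> real (card {i. i < T \<and> \<not> gd z x n i}) \<le> real n * (1 / (8 * real n)) * real (T + n)"
    using bad_bound[OF d] by blast
  define T where "T = T0 + nat \<lceil>8 * C + 8 * real I + real n + 1\<rceil>"
  have "T \<ge> T0" unfolding T_def by simp
  have Tbig: "real T > 8 * C + 8 * real I + real n" unfolding T_def by linarith
  have "{i. i < T \<and> i \<in> S} \<subseteq> {i. i < T \<and> \<not> gd z x n i} \<union> {..<I}"
    using nogood by (auto simp: not_less)
  then have "card {i. i < T \<and> i \<in> S} \<le> card ({i. i < T \<and> \<not> gd z x n i} \<union> {..<I})"
    by (intro card_mono) auto
  also have "\<dots> \<le> card {i. i < T \<and> \<not> gd z x n i} + card {..<I}" by (rule card_Un_le)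
  finally have "card {i. i < T \<and> i \<in> S} \<le> card {i. i < T \<and> \<not> gd z x n i} + I" by simp
  then have "real (card {i. i < T \<and> i \<in> S}) \<le> real (card {i. i < T \<and> \<not> gd z x n i}) + real I"
    using of_nat_mono[where 'a=real] by fastforce
  also have "\<dots> \<le> real n * (1 / (8 * real n)) * real (T + n) + real I" using T0[OF \<open>T \<ge> T0\<close>] by simp
  also have "real n * (1 / (8 * real n)) = 1 / 8" using n by simp
  finally have "real (card {i. i < T \<and> i \<in> S}) \<le> real (T + n) / 8 + real I" by simp
  moreover have "real (card {i. i < T \<and> i \<in> S}) \<ge> real T / 4 - C" by (rule dens)
  moreover have "real (T + n) / 8 = real T / 8 + real n / 8" by (simp add: add_divide_distrib)
  ultimately show False using Tbig by linarith
qed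

lemma good_pair:
  assumes d: "dbar z x < 1 / (8 * real n)" and n: "n \<ge> 1"
  shows "\<exists>i. gd z x n i \<and> gd z x n (i + P)"
proof (rule ccontr)
  assume "\<not> ?thesis"
  then have nogood: "\<And>i. \<not> gd z x n i \<or> \<not> gd z x n (i + P)" by blast
  obtain T0 where T0: "\<And>T. T \<ge> T0 \<Longrightarrow> real (card {i. i < T \<and> \<not> gd z x n i}) \<le> real n * (1 / (8 * real n)) * real (T + n)"
    using bad_bound[OF d] by blast
  define T where "T = T0 + P + n + 1"
  let ?B = "\<lambda>T. card {i. i < T \<and> \<not> gd z x n i}"
  have "{..<T} \<subseteq> {i. i < T \<and> \<not> gd z x n i} \<union> {i. i < T \<and> \<not> gd z x n (i + P)}"
    using nogood by auto
  then have "card {..<T} \<le> card ({i. i < T \<and> \<not> gd z x n i} \<union> {i. i < T \<and> \<not> gd z x n (i + P)})"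
    by (intro card_mono) auto
  also have "\<dots> \<le> ?B T + card {i. i < T \<and> \<not> gd z x n (i + P)}" by (rule card_Un_le)
  also have "card {i. i < T \<and> \<not> gd z x n (i + P)} \<le> ?B (T + P)"
    by (rule card_shift_le)
  also have "?B T \<le> ?B (T + P)" by (rule card_mono_T) simp
  finally have "T \<le> 2 * ?B (T + P)" by simp
  then have "real T \<le> 2 * real (?B (T + P))" by linarith
  also have "real (?B (T + P)) \<le> real n * (1 / (8 * real n)) * real (T + P + n)"
    using T0[of "T + P"] unfolding T_def by simp
  also have "real n * (1 / (8 * real n)) = 1 / 8" using n by simp
  finally have "real T \<le> real (T + P + n) / 4" by simp
  then show False unfolding T_def by simp
qed

lemma card_blocks:
  assumes L: "L \<ge> 1" and R: "R \<le> L" and e: "e \<le> (1::nat)"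
  shows "(T div (2 * L)) * R \<le> card {i. i < T \<and> (i div L) mod 2 = e \<and> i mod L < R}"
proof -
  let ?q = "T div (2 * L)"
  define f where "f = (\<lambda>(j, r). (2 * j + e) * L + r)"
  have divmod: "((2 * j + e) * L + r) div L = 2 * j + e" "((2 * j + e) * L + r) mod L = r" if "r < L" for j r
    using that L by simp_all
  have "inj_on f ({..<?q} \<times> {..<R})"
  proof (rule inj_onI)
    fix a b assume a: "a \<in> {..<?q} \<times> {..<R}" and b: "b \<in> {..<?q} \<times> {..<R}" and eq: "f a = f b"
    obtain j r where [simp]: "a = (j, r)" by (cases a)
    obtain j' r' where [simp]: "b = (j', r')" by (cases b)
    have "r < L" "r' < L" using a b R by auto
    have F: "(2 * j + e) * L + r = (2 * j' + e) * L + r'" using eq unfolding f_def by simp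
    have F1: "((2 * j + e) * L + r) div L = ((2 * j' + e) * L + r') div L" by (simp only: F)
    have F2: "((2 * j + e) * L + r) mod L = ((2 * j' + e) * L + r') mod L" by (simp only: F)
    have "2 * j + e = 2 * j' + e" using divmod(1)[OF \<open>r < L\<close>, of j] divmod(1)[OF \<open>r' < L\<close>, of j'] F1
      by linarith
    moreover have "r = r'" using divmod(2)[OF \<open>r < L\<close>, of j] divmod(2)[OF \<open>r' < L\<close>, of j'] F2
      by linarith
    ultimately show "a = b" by simp
  qed
  moreover have "f ` ({..<?q} \<times> {..<R}) \<subseteq> {i. i < T \<and> (i div L) mod 2 = e \<and> i mod L < R}"
  proof
    fix i assume "i \<in> f ` ({..<?q} \<times> {..<R})"
    then obtain j r where jr: "j < ?q" "r < R" "i = (2 * j + e) * L + r" unfolding f_def by auto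
    have rL: "r < L" using jr R by simp
    have eL: "e * L \<le> 1 * L" using e by (rule mult_right_mono) simp
    have x1: "(2 * j + e) * L + r = 2 * (j * L) + e * L + r" by (simp add: algebra_simps)
    have x2: "(2 * j + 2) * L = 2 * (j * L) + 2 * L" by (simp add: algebra_simps)
    have "(2 * j + e) * L + r < (2 * j + 2) * L" using rL eL x1 x2 by linarith
    also have "(2 * j + 2) * L \<le> 2 * L * ?q"
    proof -
      have "j + 1 \<le> ?q" using jr(1) by simp
      then have "2 * L * (j + 1) \<le> 2 * L * ?q" by (rule mult_le_mono2)
      moreover have "(2 * j + 2) * L = 2 * L * (j + 1)" by (simp add: algebra_simps)
      ultimately show ?thesis by (simp only:)
    qed
    also have "2 * L * ?q \<le> T" by (simp add: mult.commute[of "2 * L"])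
    finally have "i < T" using jr by simp
    moreover have "(i div L) mod 2 = e" using divmod(1)[OF rL, of j] jr e by simp
    moreover have "i mod L < R" using divmod(2)[OF rL, of j] jr by simp
    ultimately show "i \<in> {i. i < T \<and> (i div L) mod 2 = e \<and> i mod L < R}" by simp
  qed
  ultimately have "card ({..<?q} \<times> {..<R}) \<le> card {i. i < T \<and> (i div L) mod 2 = e \<and> i mod L < R}"
    by (intro card_inj_on_le) auto
  then show ?thesis by (simp add: card_cartesian_product)
qed

lemma card_blocks_real:
  assumes L: "L \<ge> 2 * n" "L \<ge> 1" and e: "e \<le> (1::nat)"
  shows "real (card {i. i < T \<and> i \<in> {i. (i div L) mod 2 = e \<and> i mod L + n \<le> L}}) \<ge> real T / 4 - real L"
proof -
  define R where "R = L + 1 - n"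
  have RL: "R \<le> L + 1" unfolding R_def by simp
  have set_eq: "{i. i < T \<and> i \<in> {i. (i div L) mod 2 = e \<and> i mod L + n \<le> L}} =
      {i. i < T \<and> (i div L) mod 2 = e \<and> i mod L < min R L}"
    unfolding R_def using L by auto
  have "(T div (2 * L)) * min R L \<le> card {i. i < T \<and> (i div L) mod 2 = e \<and> i mod L < min R L}"
    by (rule card_blocks) (use L e in auto)
  then have c: "real (T div (2 * L)) * real (min R L) \<le> real (card {i. i < T \<and> i \<in> {i. (i div L) mod 2 = e \<and> i mod L + n \<le> L}})"
    unfolding set_eq using of_nat_mono[where 'a=real] by fastforce
  have q: "real (T div (2 * L)) \<ge> real T / (2 * real L) - 1"
  proof -
    have m1: "T mod (2 * L) < 2 * L" using L by simp
    have m2: "T = 2 * L * (T div (2 * L)) + T mod (2 * L)" by simp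
    have m3: "2 * L * (T div (2 * L) + 1) = 2 * L * (T div (2 * L)) + 2 * L" by (simp add: algebra_simps)
    have "T < 2 * L * (T div (2 * L) + 1)" using m1 m2 m3 by linarith
    then have "real T < real (2 * L * (T div (2 * L) + 1))" by (simp only: of_nat_less_iff)
    then have "real T < 2 * real L * (real (T div (2 * L)) + 1)" by (simp add: distrib_left)
    moreover have pos: "2 * real L > 0" using L by simp
    ultimately have "real T / (2 * real L) < real (T div (2 * L)) + 1"
      by (simp add: pos_divide_less_eq mult.commute)
    then show ?thesis by linarith
  qed
  have m: "2 * real (min R L) \<ge> real L" "real (min R L) \<le> real L"
    unfolding R_def using L by auto
  have "real T / 4 - real L \<le> (real T / (2 * real L) - 1) * real (min R L)"
  proof -
    have "(real T / (2 * real L)) * real (min R L) \<ge> (real T / (2 * real L)) * (real L / 2)"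
      using m L by (intro mult_left_mono) auto
    also have "(real T / (2 * real L)) * (real L / 2) = real T / 4" using L by simp
    finally have h: "real T / 4 \<le> (real T / (2 * real L)) * real (min R L)" .
    have "(real T / (2 * real L) - 1) * real (min R L) = (real T / (2 * real L)) * real (min R L) - real (min R L)"
      by (simp add: algebra_simps)
    then show ?thesis using h m by linarith
  qed
  also have "\<dots> \<le> real (T div (2 * L)) * real (min R L)"
  proof (cases "real T / (2 * real L) - 1 \<le> 0")
    case True
    then have "(real T / (2 * real L) - 1) * real (min R L) \<le> 0" by (simp add: mult_nonpos_nonneg)
    also have "0 \<le> real (T div (2 * L)) * real (min R L)" by simp
    finally show ?thesis .
  next
    case False
    then show ?thesis using q by (intro mult_right_mono) auto
  qed
  finally show ?thesis using c by linarith
qed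



definition glue :: "(nat \<Rightarrow> 'a) \<Rightarrow> nat \<Rightarrow> (nat \<Rightarrow> 'a) \<Rightarrow> nat \<Rightarrow> nat \<Rightarrow> nat \<Rightarrow> 'a" where
  "glue x p z q n = (\<lambda>i. if i < p + n then x i else z (i - p + q))"

lemma glue_mem:
  "x \<in> markov X n \<Longrightarrow> z \<in> markov X n \<Longrightarrow> (\<And>t. t < n \<Longrightarrow> x (p + t) = z (q + t)) \<Longrightarrow> glue x p z q n \<in> markov X n"
  unfolding glue_def by (rule markov_glue)

lemma glue_left: "i < p + n \<Longrightarrow> glue x p z q n i = x i"
  unfolding glue_def by simp

lemma glue_right:
  assumes "\<And>t. t < n \<Longrightarrow> x (p + t) = z (q + t)" "p \<le> i"
  shows "glue x p z q n i = z (i - p + q)"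
proof (cases "i < p + n")
  case True
  then have "i - p < n" using assms(2) by simp
  from assms(1)[OF this] have "x (p + (i - p)) = z (q + (i - p))" .
  then show ?thesis using True assms(2) unfolding glue_def by (simp add: add.commute)
next
  case False then show ?thesis unfolding glue_def by simp
qed

lemma win_nth: "map y [a..<a + n] = c \<Longrightarrow> t < n \<Longrightarrow> y (a + t) = c ! t"
  by (metis add_diff_cancel_left' nth_map_upt)

lemma win_eqI: "length c = n \<Longrightarrow> (\<And>t. t < n \<Longrightarrow> y (a + t) = c ! t) \<Longrightarrow> map y [a..<a + n] = c"
  by (rule nth_equalityI) (auto simp: nth_map_upt)

definition reach :: "(nat \<Rightarrow> 'a) set \<Rightarrow> nat \<Rightarrow> 'a list \<Rightarrow> 'a list \<Rightarrow> nat \<Rightarrow> bool" where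
  "reach X n c d m \<longleftrightarrow> (\<exists>y\<in>markov X n. map y [0..<0 + n] = c \<and> map y [m..<m + n] = d)"

lemma reach_comp:
  assumes "reach X n c d m1" "reach X n d e m2"
  shows "reach X n c e (m1 + m2)"
proof -
  obtain y1 where y1: "y1 \<in> markov X n" "map y1 [0..<0 + n] = c" "map y1 [m1..<m1 + n] = d"
    using assms(1) unfolding reach_def by blast
  obtain y2 where y2: "y2 \<in> markov X n" "map y2 [0..<0 + n] = d" "map y2 [m2..<m2 + n] = e"
    using assms(2) unfolding reach_def by blast
  have ag: "y1 (m1 + t) = y2 (0 + t)" if "t < n" for t
    using win_nth[OF y1(3) that] win_nth[OF y2(2) that] by simp
  define y where "y = glue y1 m1 y2 0 n"
  have "y \<in> markov X n" unfolding y_def by (rule glue_mem[OF y1(1) y2(1) ag])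
  moreover have "map y [0..<0 + n] = c"
    using y1(2) by (auto simp: y_def glue_left map_upt_eq simp del: upt_Suc)
  moreover have "map y [m1 + m2..<m1 + m2 + n] = e"
  proof -
    have h: "y (m1 + m2 + t) = y2 (m2 + t)" for t
      unfolding y_def by (subst glue_right[of n y1 m1 y2 0, OF ag]) simp_all
    have "map y [m1 + m2..<m1 + m2 + n] = map (\<lambda>j. y (m1 + m2 + j)) [0..<n]" by (rule map_upt_shift)
    also have "\<dots> = map (\<lambda>j. y2 (m2 + j)) [0..<n]" using h by simp
    also have "\<dots> = map y2 [m2..<m2 + n]" by (rule map_upt_shift[symmetric])
    finally show ?thesis using y2(3) by simp
  qed
  ultimately show ?thesis unfolding reach_def by blast
qed

lemma reach_point:
  assumes X: "shift_space X" and y: "y \<in> markov X n"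
  shows "reach X n (map y [i..<i + n]) (map y [i + m..<i + m + n]) m"
proof -
  have "(\<lambda>j. y (i + j)) \<in> markov X n"
    by (rule shift_space_shift_pow[OF markov_shift_space[OF X] y])
  moreover have "map (\<lambda>j. y (i + j)) [0..<0 + n] = map y [i..<i + n]"
    by (simp add: map_upt_shift)
  moreover have "map (\<lambda>j. y (i + j)) [m..<m + n] = map y [i + m..<i + m + n]"
    by (auto simp: map_upt_eq add.assoc simp del: upt_Suc intro!: nth_equalityI)
  ultimately show ?thesis unfolding reach_def by blast
qed

lemma reach_zero: "reach X n c d m \<Longrightarrow> reach X n c c 0"
  unfolding reach_def by auto

lemma reach_mult: "reach X n c c a \<Longrightarrow> reach X n c c (k * a)"
proof (induction k)
  case 0 then show ?case using reach_zero by simp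
next
  case (Suc k)
  then show ?case using reach_comp[of X n c c a c "k * a"] by (simp add: add.commute)
qed

lemma frobenius2:
  fixes Q m :: nat
  assumes "Q \<ge> 1" "m \<ge> Q * Q"
  shows "\<exists>a b. m = a * Q + b * (Q + 1)"
proof -
  define q where "q = m div Q"
  define r where "r = m mod Q"
  have m: "m = q * Q + r" unfolding q_def r_def by simp
  have "r < Q" unfolding r_def using assms(1) by simp
  have "q \<ge> Q"
  proof (rule ccontr)
    assume "\<not> Q \<le> q"
    then have "q + 1 \<le> Q" by simp
    then have "(q + 1) * Q \<le> Q * Q" by (rule mult_right_mono) simp
    then have "q * Q + Q \<le> Q * Q" by (simp add: algebra_simps)
    then show False using m \<open>r < Q\<close> assms(2) by linarith
  qed
  then have "q \<ge> r" using \<open>r < Q\<close> by simp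
  have "(q - r) * Q + r * (Q + 1) = q * Q + r"
  proof -
    have "(q - r) * Q + r * Q = q * Q" using \<open>q \<ge> r\<close> by (metis add_mult_distrib le_add_diff_inverse2)
    then show ?thesis by (simp add: algebra_simps)
  qed
  then show ?thesis using m by metis
qed

lemma reach_large:
  assumes "reach X n c c Q" "reach X n c c (Q + 1)" "Q \<ge> 1" "m \<ge> Q * Q"
  shows "reach X n c c m"
proof -
  obtain a b where ab: "m = a * Q + b * (Q + 1)" using frobenius2[OF assms(3,4)] by blast
  show ?thesis unfolding ab
    by (rule reach_comp[OF reach_mult[OF assms(1)] reach_mult[OF assms(2)]])
qed



lemma divmod_add:
  fixes i t L :: nat
  assumes lt: "i mod L + t < L"
  shows "(i + t) div L = i div L" "(i + t) mod L = i mod L + t"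
proof -
  have L0: "L \<noteq> 0" using lt by auto
  have eq: "i div L * L + (i mod L + t) = i + t" by (simp only: add.assoc[symmetric] div_mult_mod_eq)
  have "(i div L * L + (i mod L + t)) div L = i div L + (i mod L + t) div L"
    by (rule div_mult_self3[OF L0])
  also have "(i mod L + t) div L = 0" by (rule div_less[OF lt])
  finally show "(i + t) div L = i div L" unfolding eq by simp
  have "(i div L * L + (i mod L + t)) mod L = (i mod L + t) mod L"
    by (rule mod_mult_self3)
  also have "\<dots> = i mod L + t" by (rule mod_less[OF lt])
  finally show "(i + t) mod L = i mod L + t" unfolding eq .
qed

lemma shadow_obtain:
  assumes "dbar_shadowing X" "e > 0"
  obtains N where "N \<ge> 1" "\<And>w. (\<And>j. w j \<in> lang X) \<Longrightarrow> (\<And>j. length (w j) \<ge> N) \<Longrightarrow>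
      \<exists>x'\<in>X. dbar (concat_inf w) x' < e"
proof -
  have "\<exists>N::nat. N \<ge> 1 \<and> (\<forall>w :: nat \<Rightarrow> 'a list. (\<forall>j. w j \<in> lang X \<and> length (w j) \<ge> N) \<longrightarrow>
        (\<exists>x'\<in>X. dbar (concat_inf w) x' < e))"
    using assms(1)[unfolded dbar_shadowing_def, rule_format, OF assms(2)] .
  then obtain N :: nat where N: "N \<ge> 1" and H: "\<forall>w :: nat \<Rightarrow> 'a list. (\<forall>j. w j \<in> lang X \<and> length (w j) \<ge> N) \<longrightarrow>
        (\<exists>x'\<in>X. dbar (concat_inf w) x' < e)" by (elim exE conjE)
  show ?thesis
  proof (rule that[OF N])
    fix w :: "nat \<Rightarrow> 'a list"
    assume a: "\<And>j. w j \<in> lang X" and b: "\<And>j. length (w j) \<ge> N"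
    have "\<forall>j. w j \<in> lang X \<and> length (w j) \<ge> N" using a b by simp
    then show "\<exists>x'\<in>X. dbar (concat_inf w) x' < e" using H by simp
  qed
qed

lemma irreducible:
  assumes X: "shift_space X" and surj: "shift ` X = X" and sh: "dbar_shadowing X" and n: "n \<ge> 1"
    and c: "c \<in> lang X" "length c = n" and d: "d \<in> lang X" "length d = n"
  shows "\<exists>m. reach X n c d m"
proof -
  have epos: "1 / (8 * real n) > 0" using n by simp
  obtain N where N: "N \<ge> 1" and NN: "\<And>w. (\<And>j. w j \<in> lang X) \<Longrightarrow> (\<And>j. length (w j) \<ge> N) \<Longrightarrow>
      \<exists>x'\<in>X. dbar (concat_inf w) x' < 1 / (8 * real n)"
    using shadow_obtain[OF sh epos] by blast
  define L where "L = N + 2 * n + 2"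
  have L: "L \<ge> N" "L \<ge> 2 * n" "L \<ge> 1" "L \<ge> n" unfolding L_def by simp_all
  obtain a where a: "a \<in> X" "c = map a [0..<length c]" using lang_prefix_point[OF X c(1)] by blast
  obtain p where p: "p \<in> X" "d = map p [0..<length d]" using lang_prefix_point[OF X d(1)] by blast
  obtain q where q: "q \<in> X" "\<And>i. q (L - n + i) = p i" using surj_iter[OF surj p(1), of "L - n"] by blast
  define w where "w j = (if j mod 2 = 0 then map a [0..<L] else map q [0..<L])" for j :: nat
  have wlen: "length (w j) = L" for j unfolding w_def by simp
  have wlang: "w j \<in> lang X" for j unfolding w_def using lang_prefix_word a(1) q(1) by auto
  obtain x' where x': "x' \<in> X" "dbar (concat_inf w) x' < 1 / (8 * real n)"
    using NN[of w] wlang wlen L(1) by auto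
  define z where "z = concat_inf w"
  have zi: "z i = w (i div L) ! (i mod L)" for i
    unfolding z_def by (rule concat_inf_const[OF wlen L(3)])
  have dz: "dbar z x' < 1 / (8 * real n)" using x'(2) unfolding z_def .
  define S where "S e = {i. (i div L) mod 2 = e \<and> i mod L + n \<le> L}" for e
  have dens: "real (card {i. i < T \<and> i \<in> S e}) \<ge> real T / 4 - real L" if "e \<le> 1" for T e
    unfolding S_def by (rule card_blocks_real) (use L that in auto)
  obtain i1 where i1: "i1 \<in> S 0" "gd z x' n i1"
    using good_in_set[OF dz n dens[of 0], of 0] by auto
  obtain i2 where i2: "i2 \<ge> i1 + 1" "i2 \<in> S 1" "gd z x' n i2"
    using good_in_set[OF dz n dens[of 1], of "i1 + 1"] by auto
  define r1 where "r1 = i1 mod L"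
  define r2 where "r2 = i2 mod L"
  have r1: "r1 + n \<le> L" "(i1 div L) mod 2 = 0" using i1(1) unfolding S_def r1_def by auto
  have r2: "r2 + n \<le> L" "(i2 div L) mod 2 = 1" using i2(2) unfolding S_def r2_def by auto
  have ag1: "a (r1 + t) = x' (i1 + t)" if t: "t < n" for t
  proof -
    have lt: "i1 mod L + t < L" using r1 t unfolding r1_def by simp
    have "x' (i1 + t) = z (i1 + t)" using i1(2) t unfolding gd_def by simp
    also have "\<dots> = w (i1 div L) ! (r1 + t)" unfolding zi divmod_add[OF lt] r1_def ..
    also have "\<dots> = a (r1 + t)" unfolding w_def using r1 lt r1_def by simp
    finally show ?thesis by simp
  qed
  have ag2: "x' (i2 + t) = q (r2 + t)" if t: "t < n" for t
  proof -
    have lt: "i2 mod L + t < L" using r2 t unfolding r2_def by simp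
    have "x' (i2 + t) = z (i2 + t)" using i2(3) t unfolding gd_def by simp
    also have "\<dots> = w (i2 div L) ! (r2 + t)" unfolding zi divmod_add[OF lt] r2_def ..
    also have "\<dots> = q (r2 + t)" unfolding w_def using r2 lt r2_def by simp
    finally show ?thesis .
  qed
  define y1 where "y1 = glue a r1 x' i1 n"
  have y1M: "y1 \<in> markov X n" unfolding y1_def
    by (rule glue_mem) (use a(1) x'(1) subset_markov ag1 in auto)
  define P2 where "P2 = i2 - i1 + r1"
  have y1P2: "y1 (P2 + t) = q (r2 + t)" if "t < n" for t
  proof -
    have "y1 (P2 + t) = x' (P2 + t - r1 + i1)" unfolding y1_def
      by (rule glue_right[of n a r1 x' i1]) (use ag1 P2_def in auto)
    also have "P2 + t - r1 + i1 = i2 + t" unfolding P2_def using i2(1) by simp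
    finally show ?thesis using ag2[OF that] by simp
  qed
  define y2 where "y2 = glue y1 P2 q r2 n"
  have y2M: "y2 \<in> markov X n" unfolding y2_def
    by (rule glue_mem) (use y1M q(1) subset_markov y1P2 in auto)
  define D where "D = P2 + (L - n - r2)"
  have "map y2 [0..<0 + n] = c"
  proof (rule win_eqI[OF c(2)])
    fix t assume t: "t < n"
    have "y2 (0 + t) = y1 t" unfolding y2_def using t by (simp add: glue_left)
    also have "\<dots> = a t" unfolding y1_def using t by (simp add: glue_left)
    also have "\<dots> = c ! t" using a(2) c(2) t by simp
    finally show "y2 (0 + t) = c ! t" .
  qed
  moreover have "map y2 [D..<D + n] = d"
  proof (rule win_eqI[OF d(2)])
    fix t assume t: "t < n"
    have "y2 (D + t) = q (D + t - P2 + r2)" unfolding y2_def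
      by (rule glue_right[of n y1 P2 q r2]) (use y1P2 D_def in auto)
    also have "D + t - P2 + r2 = L - n + t" unfolding D_def using r2 by simp
    also have "q (L - n + t) = p t" by (rule q(2))
    also have "\<dots> = d ! t" using p(2) d(2) t by simp
    finally show "y2 (D + t) = d ! t" .
  qed
  ultimately show ?thesis unfolding reach_def using y2M by blast
qed

lemma cycle_lens:
  assumes X: "shift_space X" and sh: "dbar_shadowing X" and n: "n \<ge> 1"
  shows "\<exists>N. \<forall>P\<ge>N. \<exists>c. c \<in> lang X \<and> length c = n \<and> reach X n c c P"
proof -
  have epos: "1 / (8 * real n) > 0" using n by simp
  obtain N where N: "N \<ge> 1" and NN: "\<And>w. (\<And>j. w j \<in> lang X) \<Longrightarrow> (\<And>j. length (w j) \<ge> N) \<Longrightarrow>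
      \<exists>x'\<in>X. dbar (concat_inf w) x' < 1 / (8 * real n)"
    using shadow_obtain[OF sh epos] by blast
  obtain x0 where x0: "x0 \<in> X" using X unfolding shift_space_def by blast
  have "\<exists>c. c \<in> lang X \<and> length c = n \<and> reach X n c c P" if P: "P \<ge> N" for P
  proof -
    define w where "w j = map x0 [0..<P]" for j :: nat
    have wlen: "length (w j) = P" for j unfolding w_def by simp
    obtain x' where x': "x' \<in> X" "dbar (concat_inf w) x' < 1 / (8 * real n)"
      using NN[of w] wlen P lang_prefix_word[OF x0] unfolding w_def by auto
    have P1: "P \<ge> 1" using N P by simp
    have zi: "concat_inf w i = x0 (i mod P)" for i
      unfolding concat_inf_const[OF wlen P1] using P1 by (simp add: w_def)
    obtain i where i: "gd (concat_inf w) x' n i" "gd (concat_inf w) x' n (i + P)"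
      using good_pair[OF x'(2) n] by blast
    have eq: "x' (i + t) = x' (i + P + t)" if "t < n" for t
    proof -
      have "x' (i + t) = concat_inf w (i + t)" using i(1) that unfolding gd_def by simp
      also have "\<dots> = concat_inf w (i + P + t)" unfolding zi
        by (simp add: add.commute add.left_commute)
      also have "\<dots> = x' (i + P + t)" using i(2) that unfolding gd_def by simp
      finally show ?thesis .
    qed
    have "map x' [i + P..<i + P + n] = map x' [i..<i + n]"
      by (auto simp: map_upt_shift eq simp del: upt_Suc)
    then have "reach X n (map x' [i..<i + n]) (map x' [i..<i + n]) P"
      using reach_point[OF X subsetD[OF subset_markov[of X n] x'(1)], where i=i and m=P] by simp
    moreover have "map x' [i..<i + n] \<in> lang X" by (rule lang_point_word[OF x'(1)])
    ultimately show ?thesis by auto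
  qed
  then show ?thesis by blast
qed



lemma upt_split3: "[0..<a + b + c] = [0..<a] @ [a..<a + b] @ [a + b..<a + b + c]"
proof -
  have "[0..<(a + b) + c] = [0..<a + b] @ [a + b..<a + b + c]" by (rule upt_add_eq_append) simp
  moreover have "[0..<a + b] = [0..<a] @ [a..<a + b]" by (rule upt_add_eq_append) simp
  ultimately show ?thesis by simp
qed

lemma markov_mixing:
  assumes X: "shift_space X" and surj: "shift ` X = X" and sh: "dbar_shadowing X" and n: "n \<ge> 1"
  shows "top_mixing (markov X n)"
proof -
  obtain N0 where N0: "\<And>P. P \<ge> N0 \<Longrightarrow> \<exists>c. c \<in> lang X \<and> length c = n \<and> reach X n c c P"
    using cycle_lens[OF X sh n] by blast
  define L where "L = N0 + 2"
  obtain c1 where c1: "c1 \<in> lang X" "length c1 = n" "reach X n c1 c1 L" using N0[of L] L_def by auto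
  obtain c2 where c2: "c2 \<in> lang X" "length c2 = n" "reach X n c2 c2 (L + 1)" using N0[of "L + 1"] L_def by auto
  obtain al where al: "reach X n c1 c2 al" using irreducible[OF X surj sh n c1(1,2) c2(1,2)] by blast
  obtain be where be: "reach X n c2 c1 be" using irreducible[OF X surj sh n c2(1,2) c1(1,2)] by blast
  define Q where "Q = al + (L - 1) * (L + 1) + be"
  have rQ: "reach X n c1 c1 Q" unfolding Q_def
    by (rule reach_comp[OF reach_comp[OF al reach_mult[OF c2(3)]] be])
  obtain k where k: "L = Suc k" unfolding L_def by simp
  have Q1: "Q + 1 = (al + be) + L * L" unfolding Q_def k by (simp add: algebra_simps)
  have rQ1: "reach X n c1 c1 (Q + 1)" unfolding Q1
    by (rule reach_comp[OF reach_comp[OF al be] reach_mult[OF c1(3)]])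
  have Qpos: "Q \<ge> 1"
  proof -
    have "(L - 1) * (L + 1) \<ge> 1 * 1" using L_def by (intro mult_le_mono) auto
    then show ?thesis unfolding Q_def by simp
  qed
  have large: "reach X n c1 c1 m" if "m \<ge> Q * Q" for m
    by (rule reach_large[OF rQ rQ1 Qpos that])
  have MS: "shift_space (markov X n)" by (rule markov_shift_space[OF X])
  show ?thesis unfolding top_mixing_def
  proof (intro ballI)
    fix u w assume u: "u \<in> lang (markov X n)" and w: "w \<in> lang (markov X n)"
    obtain pu where pu: "pu \<in> markov X n" "u = map pu [0..<length u]"
      using lang_prefix_point[OF MS u] by blast
    define c where "c = map pu [length u..<length u + n]"
    have clen: "length c = n" unfolding c_def by simp
    have "map pu [length u..<length u + (n + 1)] = c @ [pu (length u + n)]" unfolding c_def by simp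
    then have clang: "c \<in> lang X" using markovD[OF pu(1), of "length u"] lang_prefix by metis
    obtain x i where x: "x \<in> markov X n" "w = map x [i..<i + length w]"
      using w unfolding lang_def occurs_in_def by blast
    obtain y where y: "y \<in> markov X n" "\<And>k. y (n + k) = x k"
      using markov_left_iter[OF X surj x(1), of n] by blast
    define pw where "pw = (\<lambda>k. y (i + k))"
    have pwM: "pw \<in> markov X n" unfolding pw_def by (rule shift_space_shift_pow[OF MS y(1)])
    have pwn: "pw (n + t) = w ! t" if "t < length w" for t
    proof -
      have "pw (n + t) = y (n + (i + t))" unfolding pw_def by (simp add: algebra_simps)
      also have "\<dots> = x (i + t)" by (rule y(2))
      also have "\<dots> = w ! t" using win_nth[OF x(2)[symmetric] that] .
      finally show ?thesis .
    qed
    define d where "d = map pw [0..<n]"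
    have dlen: "length d = n" unfolding d_def by simp
    have "map pw [0..<0 + (n + 1)] = d @ [pw n]" unfolding d_def by simp
    then have dlang: "d \<in> lang X" using markovD[OF pwM, of 0] lang_prefix by metis
    obtain s where s: "reach X n c c1 s" using irreducible[OF X surj sh n clang clen c1(1,2)] by blast
    obtain t where t: "reach X n c1 d t" using irreducible[OF X surj sh n c1(1,2) dlang dlen] by blast
    have "\<forall>m\<ge>s + t + Q * Q + n. \<exists>v. length v = m \<and> u @ v @ w \<in> lang (markov X n)"
    proof (intro allI impI)
      fix m assume m: "m \<ge> s + t + Q * Q + n"
      define L' where "L' = m - n"
      have mL: "m = L' + n" unfolding L'_def using m by simp
      have "reach X n c d (s + (L' - s - t) + t)"
        by (rule reach_comp[OF reach_comp[OF s large] t]) (use m L'_def in simp)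
      moreover have "s + (L' - s - t) + t = L'" using m L'_def by simp
      ultimately have "reach X n c d L'" by simp
      then obtain y0 where y0: "y0 \<in> markov X n" "map y0 [0..<0 + n] = c" "map y0 [L'..<L' + n] = d"
        unfolding reach_def by blast
      have ag1: "pu (length u + tt) = y0 (0 + tt)" if "tt < n" for tt
        using win_nth[OF y0(2) that] that unfolding c_def by (simp add: nth_map_upt)
      define z1 where "z1 = glue pu (length u) y0 0 n"
      have z1M: "z1 \<in> markov X n" unfolding z1_def by (rule glue_mem[OF pu(1) y0(1) ag1])
      have ag2: "z1 (length u + L' + tt) = pw (0 + tt)" if "tt < n" for tt
      proof -
        have "z1 (length u + L' + tt) = y0 (length u + L' + tt - length u + 0)"
          unfolding z1_def by (rule glue_right[of n pu "length u" y0 0]) (use ag1 in auto)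
        also have "\<dots> = y0 (L' + tt)" by simp
        also have "\<dots> = d ! tt" by (rule win_nth[OF y0(3) that])
        also have "\<dots> = pw (0 + tt)" unfolding d_def using that by simp
        finally show ?thesis .
      qed
      define z2 where "z2 = glue z1 (length u + L') pw 0 n"
      have z2M: "z2 \<in> markov X n" unfolding z2_def by (rule glue_mem[OF z1M pwM ag2])
      define v where "v = map z2 [length u..<length u + m]"
      have p1: "map z2 [0..<length u] = u"
      proof -
        have "z2 k = pu k" if "k < length u" for k
        proof -
          have "z2 k = z1 k" unfolding z2_def using that by (simp add: glue_left)
          also have "\<dots> = pu k" unfolding z1_def using that by (simp add: glue_left)
          finally show ?thesis .
        qed
        then have "map z2 [0..<length u] = map pu [0..<length u]"
          unfolding map_upt_eq by simp
        also have "map pu [0..<length u] = u" by (rule pu(2)[symmetric])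
        finally show ?thesis .
      qed
      have p3: "map z2 [length u + m..<length u + m + length w] = w"
      proof (rule win_eqI)
        show "length w = length w" ..
        fix tt assume tt: "tt < length w"
        have "z2 (length u + m + tt) = pw (length u + m + tt - (length u + L') + 0)"
          unfolding z2_def by (rule glue_right[of n z1 "length u + L'" pw 0]) (use ag2 mL in auto)
        also have "length u + m + tt - (length u + L') + 0 = n + tt" using mL by simp
        also have "pw (n + tt) = w ! tt" by (rule pwn[OF tt])
        finally show "z2 (length u + m + tt) = w ! tt" .
      qed
      have "u @ v @ w = map z2 [0..<length u + m + length w]"
        unfolding upt_split3 map_append p1 p3 v_def ..
      then have "u @ v @ w \<in> lang (markov X n)" using lang_prefix_word[OF z2M] by simp
      moreover have "length v = m" unfolding v_def by simp
      ultimately show "\<exists>v. length v = m \<and> u @ v @ w \<in> lang (markov X n)" by blast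
    qed
    then show "\<exists>N. \<forall>m\<ge>N. \<exists>v. length v = m \<and> u @ v @ w \<in> lang (markov X n)" by blast
  qed
qed

lemma ii_imp_iii:
  assumes X: "shift_space X" and surj: "shift ` X = X" and sh: "dbar_shadowing X"
  shows "chain_mixing X \<and> dbar_approachable X"
proof
  show "chain_mixing X" unfolding chain_mixing_def eventually_sequentially
    using markov_mixing[OF X surj sh] by blast
  show "dbar_approachable X" by (rule shadowing_approachable[OF X sh])
qed



lemma inf_often:
  fixes P :: "nat \<Rightarrow> 'a::finite \<Rightarrow> bool"
  assumes "\<And>k. \<exists>b. P k b"
  shows "\<exists>b. \<forall>K. \<exists>k\<ge>K. P k b"
proof -
  obtain f where f: "\<And>k. P k (f k)" using assms by metis
  have "\<exists>a0\<in>(UNIV::nat set). \<not> finite {a\<in>UNIV. f a = f a0}"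
    by (rule pigeonhole_infinite) auto
  then obtain a0 where inf: "infinite {a. f a = f a0}" by auto
  have "\<exists>k\<ge>K. P k (f a0)" for K
  proof -
    obtain k where "k \<ge> K" "k \<in> {a. f a = f a0}" using inf unfolding infinite_nat_iff_unbounded_le by blast
    then show ?thesis using f[of k] by auto
  qed
  then show ?thesis by blast
qed

definition cons_seq :: "'a \<Rightarrow> (nat \<Rightarrow> 'a) \<Rightarrow> nat \<Rightarrow> 'a" where
  "cons_seq b x = (\<lambda>i. if i = 0 then b else x (i - 1))"

lemma shift_cons: "shift (cons_seq b x) = x"
  unfolding shift_def cons_seq_def by simp

lemma map_cons_seq: "map (cons_seq b x) [0..<Suc k] = b # map x [0..<k]"
proof (rule nth_equalityI)
  show "length (map (cons_seq b x) [0..<Suc k]) = length (b # map x [0..<k])" by simp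
  fix i assume "i < length (map (cons_seq b x) [0..<Suc k])"
  then have i: "i < Suc k" by simp
  show "map (cons_seq b x) [0..<Suc k] ! i = (b # map x [0..<k]) ! i"
  proof (cases i)
    case 0 then show ?thesis by (simp add: cons_seq_def nth_map_upt del: upt_Suc)
  next
    case (Suc j) then show ?thesis using i by (simp add: cons_seq_def nth_map_upt del: upt_Suc)
  qed
qed

lemma mixing_preimage:
  fixes Y :: "(nat \<Rightarrow> 'a::finite) set"
  assumes Y: "shift_space Y" and mix: "top_mixing Y" and x: "x \<in> Y"
  shows "\<exists>b. cons_seq b x \<in> Y"
proof -
  obtain y0 where y0: "y0 \<in> Y" using Y unfolding shift_space_def by blast
  have u: "[y0 0] \<in> lang Y" using lang_prefix_word[OF y0, of 1] by simp
  have "\<exists>b. b # map x [0..<k] \<in> lang Y" for k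
  proof -
    have w: "map x [0..<k] \<in> lang Y" by (rule lang_prefix_word[OF x])
    obtain N where "\<forall>m\<ge>N. \<exists>v. length v = m \<and> [y0 0] @ v @ map x [0..<k] \<in> lang Y"
      using mix u w unfolding top_mixing_def by blast
    then obtain v where "[y0 0] @ v @ map x [0..<k] \<in> lang Y" by blast
    moreover have "[y0 0] @ v = butlast ([y0 0] @ v) @ [last ([y0 0] @ v)]" by simp
    ultimately have "butlast ([y0 0] @ v) @ (last ([y0 0] @ v) # map x [0..<k]) \<in> lang Y"
      by (metis append.assoc append_Cons append_Nil)
    then show ?thesis using lang_suffix by blast
  qed
  then obtain b where b: "\<And>K. \<exists>k\<ge>K. b # map x [0..<k] \<in> lang Y"
    using inf_often[of "\<lambda>k b. b # map x [0..<k] \<in> lang Y"] by blast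
  have all: "b # map x [0..<k] \<in> lang Y" for k
  proof -
    obtain k' where k': "k' \<ge> k" "b # map x [0..<k'] \<in> lang Y" using b by blast
    have "[0..<k'] = [0..<k] @ [k..<k']" using k'(1) by (metis le_add_diff_inverse upt_add_eq_append zero_le)
    then have "b # map x [0..<k'] = (b # map x [0..<k]) @ map x [k..<k']" by simp
    then show ?thesis using k'(2) lang_prefix by metis
  qed
  have "cons_seq b x \<in> Y"
  proof (rule closed_from_prefixes[OF Y])
    fix k
    have "map (cons_seq b x) [0..<Suc k] \<in> lang Y" unfolding map_cons_seq by (rule all)
    moreover have "map (cons_seq b x) [0..<Suc k] = map (cons_seq b x) [0..<k] @ [cons_seq b x k]" by simp
    ultimately show "map (cons_seq b x) [0..<k] \<in> lang Y" using lang_prefix by metis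
  qed
  then show ?thesis by blast
qed

lemma i_imp_surj:
  fixes X :: "(nat \<Rightarrow> 'a::finite) set"
  assumes X: "shift_space X" and Xs: "\<forall>n. sofic (Xs n) \<and> top_mixing (Xs n)" "decseq Xs" "X = (\<Inter>n. Xs n)"
  shows "shift ` X = X"
proof
  show "shift ` X \<subseteq> X" using X unfolding shift_space_def by blast
  show "X \<subseteq> shift ` X"
  proof
    fix x assume x: "x \<in> X"
    have "\<exists>b. cons_seq b x \<in> Xs n" for n
    proof (rule mixing_preimage)
      show "shift_space (Xs n)" using Xs(1) unfolding sofic_def by blast
      show "top_mixing (Xs n)" using Xs(1) by blast
      show "x \<in> Xs n" using x Xs(3) by blast
    qed
    then obtain b where b: "\<And>K. \<exists>k\<ge>K. cons_seq b x \<in> Xs k"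
      using inf_often[of "\<lambda>n b. cons_seq b x \<in> Xs n"] by blast
    have "cons_seq b x \<in> Xs n" for n
    proof -
      obtain k where "k \<ge> n" "cons_seq b x \<in> Xs k" using b by blast
      then show ?thesis using Xs(2) unfolding decseq_def by blast
    qed
    then have "cons_seq b x \<in> X" using Xs(3) by blast
    then show "x \<in> shift ` X" using shift_cons[of b x] by (metis image_eqI)
  qed
qed



definition gpath :: "(nat \<times> 'a \<times> nat) set \<Rightarrow> (nat \<Rightarrow> nat) \<Rightarrow> (nat \<Rightarrow> 'a) \<Rightarrow> bool" where
  "gpath E p x \<longleftrightarrow> (\<forall>i. (p i, x i, p (Suc i)) \<in> E)"

definition splice :: "(nat \<Rightarrow> 'b) \<Rightarrow> nat \<Rightarrow> (nat \<Rightarrow> 'b) \<Rightarrow> nat \<Rightarrow> nat \<Rightarrow> 'b" where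
  "splice f a g b = (\<lambda>k. if k < a then f k else g (k - a + b))"

lemma gpath_splice:
  assumes "gpath E p1 x1" "gpath E p2 x2" "p1 a = p2 b"
  shows "gpath E (splice p1 a p2 b) (splice x1 a x2 b)"
  unfolding gpath_def
proof
  fix i
  show "(splice p1 a p2 b i, splice x1 a x2 b i, splice p1 a p2 b (Suc i)) \<in> E"
  proof (cases "Suc i < a")
    case True then show ?thesis using assms(1) unfolding gpath_def splice_def by simp
  next
    case False
    show ?thesis
    proof (cases "i < a")
      case True
      then have "Suc i = a" using False by simp
      have e1: "splice p1 a p2 b (Suc i) = p1 (Suc i)" unfolding splice_def using \<open>Suc i = a\<close> assms(3) by simp
      have e2: "splice p1 a p2 b i = p1 i" "splice x1 a x2 b i = x1 i" unfolding splice_def using True by simp_all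
      have "(p1 i, x1 i, p1 (Suc i)) \<in> E" using assms(1) unfolding gpath_def by blast
      then show ?thesis unfolding e1 e2 .
    next
      case False
      then have "Suc i - a + b = Suc (i - a + b)" by simp
      then show ?thesis using assms(2) False \<open>\<not> Suc i < a\<close> unfolding gpath_def splice_def by simp
    qed
  qed
qed

lemma gpath_shift: "gpath E p x \<Longrightarrow> gpath E (\<lambda>k. p (c + k)) (\<lambda>k. x (c + k))"
  unfolding gpath_def by simp

definition Sv :: "(nat \<times> 'a \<times> nat) set \<Rightarrow> 'a list \<Rightarrow> nat set" where
  "Sv E u = {v. \<exists>x p i. gpath E p x \<and> map x [i..<i + length u] = u \<and> p (i + length u) = v}"

definition Tv :: "(nat \<times> 'a \<times> nat) set \<Rightarrow> 'a list \<Rightarrow> nat set" where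
  "Tv E w = {v. \<exists>x p. gpath E p x \<and> map x [0..<0 + length w] = w \<and> p 0 = v}"

lemma Sv_sub: "Sv E u \<subseteq> fst ` E"
proof
  fix v assume "v \<in> Sv E u"
  then obtain x p i where "gpath E p x" "p (i + length u) = v" unfolding Sv_def by blast
  then have "(v, x (i + length u), p (Suc (i + length u))) \<in> E" unfolding gpath_def by blast
  then show "v \<in> fst ` E" by (rule rev_image_eqI) simp
qed

lemma Tv_sub: "Tv E w \<subseteq> fst ` E"
proof
  fix v assume "v \<in> Tv E w"
  then obtain x p where "gpath E p x" "p 0 = v" unfolding Tv_def by blast
  then have "(v, x 0, p (Suc 0)) \<in> E" unfolding gpath_def by blast
  then show "v \<in> fst ` E" by (rule rev_image_eqI) simp
qed

lemma transfer:
  assumes Yeq: "Y = {x. \<exists>p. gpath E p x}"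
    and mem: "u0 @ g @ w0 \<in> lang Y" and S: "Sv E u = Sv E u0" and T: "Tv E w = Tv E w0"
  shows "u @ g @ w \<in> lang Y"
proof -
  obtain x i where x: "x \<in> Y" "u0 @ g @ w0 = map x [i..<i + length (u0 @ g @ w0)]"
    using mem unfolding lang_def occurs_in_def by blast
  obtain p where p: "gpath E p x" using x(1) Yeq by blast
  have xk: "x (i + k) = (u0 @ g @ w0) ! k" if "k < length (u0 @ g @ w0)" for k
    using win_nth[OF x(2)[symmetric] that] .
  have xu0: "map x [i..<i + length u0] = u0"
  proof (rule win_eqI)
    fix k assume "k < length u0"
    then show "x (i + k) = u0 ! k" using xk[of k] by (simp add: nth_append)
  qed simp
  have xg: "x (i + length u0 + k) = g ! k" if "k < length g" for k
    using xk[of "length u0 + k"] that by (simp add: nth_append add.assoc)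
  have xw0: "x (i + length u0 + length g + k) = w0 ! k" if "k < length w0" for k
    using xk[of "length u0 + length g + k"] that by (simp add: nth_append add.assoc)
  have "p (i + length u0) \<in> Sv E u0" unfolding Sv_def using p xu0 by blast
  then have "p (i + length u0) \<in> Sv E u" using S by simp
  then obtain x' p' i' where x': "gpath E p' x'" "map x' [i'..<i' + length u] = u"
    "p' (i' + length u) = p (i + length u0)" unfolding Sv_def by blast
  define a where "a = i' + length u"
  define x4 where "x4 = splice x' a x (i + length u0)"
  define p4 where "p4 = splice p' a p (i + length u0)"
  have p4: "gpath E p4 x4" unfolding x4_def p4_def
    by (rule gpath_splice[OF x'(1) p]) (use x'(3) a_def in simp)
  let ?c = "i + length u0 + length g"
  have "map (\<lambda>k. x (?c + k)) [0..<0 + length w0] = w0"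
    by (rule win_eqI) (simp_all add: xw0)
  then have "p ?c \<in> Tv E w0" unfolding Tv_def using gpath_shift[OF p, of ?c] by fastforce
  then have "p ?c \<in> Tv E w" using T by simp
  then obtain x'' p'' where x'': "gpath E p'' x''" "map x'' [0..<0 + length w] = w" "p'' 0 = p ?c"
    unfolding Tv_def by blast
  define x5 where "x5 = splice x4 (a + length g) x'' 0"
  define p5 where "p5 = splice p4 (a + length g) p'' 0"
  have "p4 (a + length g) = p ?c" unfolding p4_def splice_def by (simp add: algebra_simps)
  then have p5: "gpath E p5 x5" unfolding x5_def p5_def
    by (intro gpath_splice[OF p4 x''(1)]) (use x''(3) in simp)
  then have x5Y: "x5 \<in> Y" using Yeq by blast
  have "map x5 [i'..<i' + length (u @ g @ w)] = u @ g @ w"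
  proof (rule win_eqI)
    fix k assume k: "k < length (u @ g @ w)"
    show "x5 (i' + k) = (u @ g @ w) ! k"
    proof (cases "k < length u")
      case True
      have "x5 (i' + k) = x' (i' + k)" unfolding x5_def x4_def splice_def a_def using True by simp
      also have "\<dots> = u ! k" by (rule win_nth[OF x'(2) True])
      finally show ?thesis using True by (simp add: nth_append)
    next
      case False
      show ?thesis
      proof (cases "k < length u + length g")
        case True
        have "x5 (i' + k) = x (i' + k - a + (i + length u0))"
          unfolding x5_def x4_def splice_def a_def using True False by simp
        also have "i' + k - a + (i + length u0) = i + length u0 + (k - length u)"
          unfolding a_def using False by simp
        also have "x (i + length u0 + (k - length u)) = g ! (k - length u)"
          by (rule xg) (use True False in simp)
        finally have h: "x5 (i' + k) = g ! (k - length u)" .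
        have "(u @ g @ w) ! k = (g @ w) ! (k - length u)" using False by (simp add: nth_append)
        also have "\<dots> = g ! (k - length u)"
        proof -
          have kg: "k - length u < length g" using True False by arith
          then show ?thesis by (simp add: nth_append)
        qed
        finally show ?thesis using h by simp
      next
        case False2: False
        have "x5 (i' + k) = x'' (i' + k - (a + length g) + 0)"
          unfolding x5_def splice_def a_def using False2 by simp
        also have "i' + k - (a + length g) + 0 = 0 + (k - length u - length g)"
          unfolding a_def using False2 by simp
        also have "x'' (0 + (k - length u - length g)) = w ! (k - length u - length g)"
          by (rule win_nth[OF x''(2)]) (use k False2 in simp)
        finally have h: "x5 (i' + k) = w ! (k - length u - length g)" .
        have "(u @ g @ w) ! k = (g @ w) ! (k - length u)" using False by (simp add: nth_append)
        also have "\<dots> = w ! (k - length u - length g)"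
        proof -
          have kg: "\<not> k - length u < length g" using False2 by arith
          then show ?thesis by (simp add: nth_append)
        qed
        finally show ?thesis using h by simp
      qed
    qed
  qed simp
  then show ?thesis using x5Y unfolding lang_def occurs_in_def by (intro CollectI bexI[of _ x5] exI[of _ i']) simp_all
qed



lemma sofic_spec:
  assumes sof: "sofic Y" and mix: "top_mixing Y"
  shows "\<exists>M. \<forall>u\<in>lang Y. \<forall>w\<in>lang Y. \<forall>m\<ge>M. \<exists>v. length v = m \<and> u @ v @ w \<in> lang Y"
proof -
  obtain E where fin: "finite E" and Yeq0: "Y = {x. \<exists>p :: nat \<Rightarrow> nat. \<forall>i. (p i, x i, p (Suc i)) \<in> E}"
    using sof unfolding sofic_def by blast
  have Yeq: "Y = {x. \<exists>p. gpath E p x}" using Yeq0 unfolding gpath_def .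
  define cls where "cls uw = (Sv E (fst uw), Tv E (snd uw))" for uw
  define K where "K = cls ` (lang Y \<times> lang Y)"
  have finK: "finite K"
  proof -
    have "K \<subseteq> Pow (fst ` E) \<times> Pow (fst ` E)" unfolding K_def cls_def using Sv_sub Tv_sub by fastforce
    moreover have "finite (Pow (fst ` E) \<times> Pow (fst ` E))" using fin by simp
    ultimately show ?thesis by (rule finite_subset)
  qed
  define Nm where "Nm uw = (SOME N. \<forall>m\<ge>N. \<exists>v. length v = m \<and> fst uw @ v @ snd uw \<in> lang Y)" for uw
  have Nm: "\<forall>m\<ge>Nm uw. \<exists>v. length v = m \<and> fst uw @ v @ snd uw \<in> lang Y" if "uw \<in> lang Y \<times> lang Y" for uw
  proof -
    have "\<exists>N. \<forall>m\<ge>N. \<exists>v. length v = m \<and> fst uw @ v @ snd uw \<in> lang Y"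
      using mix that unfolding top_mixing_def by auto
    then show ?thesis unfolding Nm_def by (rule someI_ex)
  qed
  define rep where "rep k = (SOME uw. uw \<in> lang Y \<times> lang Y \<and> cls uw = k)" for k
  have rep: "rep k \<in> lang Y \<times> lang Y \<and> cls (rep k) = k" if "k \<in> K" for k
  proof -
    have "\<exists>uw. uw \<in> lang Y \<times> lang Y \<and> cls uw = k" using that unfolding K_def by blast
    then show ?thesis unfolding rep_def by (rule someI_ex)
  qed
  define M where "M = Max (insert 0 ((\<lambda>k. Nm (rep k)) ` K))"
  have MK: "Nm (rep k) \<le> M" if "k \<in> K" for k
    unfolding M_def by (rule Max_ge) (use finK that in auto)
  have "\<forall>u\<in>lang Y. \<forall>w\<in>lang Y. \<forall>m\<ge>M. \<exists>v. length v = m \<and> u @ v @ w \<in> lang Y"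
  proof (intro ballI allI impI)
    fix u w m assume u: "u \<in> lang Y" and w: "w \<in> lang Y" and m: "m \<ge> M"
    define k where "k = cls (u, w)"
    have kK: "k \<in> K" unfolding K_def k_def using u w by blast
    obtain u0 w0 where uw0: "rep k = (u0, w0)" by (cases "rep k")
    have r: "(u0, w0) \<in> lang Y \<times> lang Y" "cls (u0, w0) = k" using rep[OF kK] uw0 by auto
    have "m \<ge> Nm (u0, w0)" using MK[OF kK] m uw0 by simp
    then obtain v where v: "length v = m" "u0 @ v @ w0 \<in> lang Y" using Nm[OF r(1)] by auto
    have S: "Sv E u = Sv E u0" and T: "Tv E w = Tv E w0"
      using r(2) unfolding k_def cls_def by auto
    have "u @ v @ w \<in> lang Y" by (rule transfer[OF Yeq v(2) S T])
    then show "\<exists>v. length v = m \<and> u @ v @ w \<in> lang Y" using v(1) by blast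
  qed
  then show ?thesis by blast
qed



primrec Pseq :: "(nat \<Rightarrow> 'a list) \<Rightarrow> ('a list \<Rightarrow> 'a list \<Rightarrow> 'a list) \<Rightarrow> nat \<Rightarrow> 'a list" where
  "Pseq bp gp 0 = bp 0"
| "Pseq bp gp (Suc j) = Pseq bp gp j @ gp (Pseq bp gp j) (bp (Suc j)) @ bp (Suc j)"

lemma Pseq_ext: "j \<le> j' \<Longrightarrow> \<exists>s. Pseq bp gp j' = Pseq bp gp j @ s"
proof (induction j' rule: dec_induct)
  case base then show ?case by simp
next
  case (step k)
  then obtain s where "Pseq bp gp k = Pseq bp gp j @ s" by blast
  then show ?case by simp
qed

lemma Pseq_prefix: "j \<le> j' \<Longrightarrow> take (length (Pseq bp gp j)) (Pseq bp gp j') = Pseq bp gp j"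
  using Pseq_ext[of j j' bp gp] by auto

lemma block_decomp:
  fixes w :: "nat \<Rightarrow> 'a list"
  assumes pos: "\<And>k. length (w k) \<ge> 1"
  shows "\<exists>j r. r < length (w j) \<and> i = (\<Sum>k<j. length (w k)) + r"
proof -
  define S where "S j = (\<Sum>k<j. length (w k))" for j :: nat
  have S_Suc: "S (Suc j) = S j + length (w j)" for j unfolding S_def by simp
  have Sge: "S j \<ge> j" for j
  proof (induction j)
    case 0 then show ?case by (simp add: S_def)
  next
    case (Suc j) then show ?case using pos[of j] S_Suc[of j] by simp
  qed
  have ex: "\<exists>j. i < S (Suc j)" using Sge[of "Suc i"] by (intro exI[of _ i]) simp
  define j where "j = (LEAST j. i < S (Suc j))"
  have j1: "i < S (Suc j)" unfolding j_def by (rule LeastI_ex[OF ex])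
  have j2: "S j \<le> i"
  proof (cases j)
    case 0 then show ?thesis by (simp add: S_def)
  next
    case (Suc j0)
    have "\<not> i < S (Suc j0)"
    proof
      assume "i < S (Suc j0)"
      then have "j \<le> j0" unfolding j_def by (rule Least_le)
      then show False using Suc by simp
    qed
    then show ?thesis using Suc by simp
  qed
  show ?thesis
    by (rule exI[of _ j], rule exI[of _ "i - S j"]) (use j1 j2 S_Suc in \<open>auto simp: S_def\<close>)
qed

lemma spec_shadow:
  fixes Y :: "(nat \<Rightarrow> 'a) set"
  assumes Y: "shift_space Y"
    and spec: "\<forall>u\<in>lang Y. \<forall>v\<in>lang Y. \<forall>m\<ge>M. \<exists>g. length g = m \<and> u @ g @ v \<in> lang Y"
    and wl: "\<And>j. w j \<in> lang Y" and wlen: "\<And>j. length (w j) \<ge> N" and N: "N \<ge> M + 1"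
  shows "\<exists>y\<in>Y. dbar (concat_inf w) y \<le> 2 * real M / real N"
proof -
  define S where "S j = (\<Sum>k<j. length (w k))" for j :: nat
  have S_Suc: "S (Suc j) = S j + length (w j)" for j unfolding S_def by simp
  have SjN: "S j \<ge> j * N" for j
  proof (induction j)
    case 0 then show ?case by (simp add: S_def)
  next
    case (Suc j) then show ?case using wlen[of j] S_Suc[of j] by simp
  qed
  have SM: "S (Suc j) \<ge> M" for j using S_Suc[of j] wlen[of j] N by simp
  define bp where "bp j = take (length (w j) - M) (w j)" for j
  have bpl: "bp j \<in> lang Y" for j
  proof -
    have "w j = bp j @ drop (length (w j) - M) (w j)" unfolding bp_def by simp
    then show ?thesis using wl[of j] lang_prefix by metis
  qed
  have bplen: "length (bp j) = length (w j) - M" for j unfolding bp_def by simp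
  define gp where "gp u v = (SOME g. length g = M \<and> u @ g @ v \<in> lang Y)" for u v
  have gp: "length (gp u v) = M \<and> u @ gp u v @ v \<in> lang Y" if "u \<in> lang Y" "v \<in> lang Y" for u v
  proof -
    have "\<exists>g. length g = M \<and> u @ g @ v \<in> lang Y" using spec that by blast
    then show ?thesis unfolding gp_def by (rule someI_ex)
  qed
  define P where "P = Pseq bp gp"
  have P0: "P 0 = bp 0" unfolding P_def by simp
  have PS: "P (Suc j) = P j @ gp (P j) (bp (Suc j)) @ bp (Suc j)" for j unfolding P_def by simp
  have Pinv: "P j \<in> lang Y \<and> length (P j) = S (Suc j) - M" for j
  proof (induction j)
    case 0 then show ?case using bpl[of 0] bplen[of 0] by (simp add: P0 S_def)
  next
    case (Suc j)
    have g: "length (gp (P j) (bp (Suc j))) = M" "P j @ gp (P j) (bp (Suc j)) @ bp (Suc j) \<in> lang Y"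
      using gp[OF conjunct1[OF Suc.IH] bpl] by auto
    have "length (P (Suc j)) = S (Suc j) - M + M + (length (w (Suc j)) - M)"
      unfolding PS using Suc.IH g(1) bplen by simp
    also have "\<dots> = S (Suc (Suc j)) - M" using SM[of j] wlen[of "Suc j"] N S_Suc[of "Suc j"] by simp
    finally show ?case using g(2) PS by simp
  qed
  have Plen: "length (P j) \<ge> j + 1" for j
  proof -
    have "S (Suc j) \<ge> Suc j * N" by (rule SjN)
    moreover have "Suc j * N \<ge> Suc j * (M + 1)" using N by (intro mult_le_mono2)
    moreover have "Suc j * (M + 1) = M + (j * M + j + 1)" by (simp add: algebra_simps)
    ultimately show ?thesis using Pinv[of j] by simp
  qed
  have pref: "take (length (P j)) (P j') = P j" if "j \<le> j'" for j j'
    unfolding P_def by (rule Pseq_prefix[OF that])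
  define y where "y i = P i ! i" for i
  have ynth: "y i = P j ! i" if "i < length (P j)" for i j
  proof (cases "j \<le> i")
    case True
    have "P i ! i = take (length (P j)) (P i) ! i" using that by simp
    then show ?thesis unfolding y_def pref[OF True] .
  next
    case False
    then have "i \<le> j" by simp
    have "i < length (P i)" using Plen[of i] by simp
    have "P j ! i = take (length (P i)) (P j) ! i" using \<open>i < length (P i)\<close> by simp
    then show ?thesis unfolding y_def pref[OF \<open>i \<le> j\<close>] by simp
  qed
  have yblock: "y (S j + r) = w j ! r" if r: "r < length (w j) - M" for j r
  proof -
    have lt: "S j + r < length (P j)" using Pinv[of j] S_Suc[of j] r by simp
    have "P j ! (S j + r) = bp j ! r"
    proof (cases j)
      case 0 then show ?thesis using P0 by (simp add: S_def)
    next
      case (Suc j0)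
      have l: "length (P j0 @ gp (P j0) (bp (Suc j0))) = S j"
        using Pinv[of j0] gp[OF conjunct1[OF Pinv[of j0]] bpl[of "Suc j0"]] SM[of j0] Suc by simp
      have eqP: "P j = (P j0 @ gp (P j0) (bp (Suc j0))) @ bp j" using PS[of j0] Suc by simp
      have "P j ! (S j + r) = ((P j0 @ gp (P j0) (bp (Suc j0))) @ bp j) ! (length (P j0 @ gp (P j0) (bp (Suc j0))) + r)"
        by (simp only: eqP l)
      also have "\<dots> = bp j ! r" by (rule nth_append_length_plus)
      finally show ?thesis .
    qed
    also have "\<dots> = w j ! r" unfolding bp_def using r by simp
    finally show ?thesis using ynth[OF lt] by simp
  qed
  have yY: "y \<in> Y"
  proof (rule closed_from_prefixes[OF Y])
    fix k
    have "map y [0..<k] = take k (P k)"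
      by (rule nth_equalityI) (use Plen[of k] in \<open>auto simp: ynth nth_map_upt\<close>)
    moreover have "P k = take k (P k) @ drop k (P k)" by simp
    ultimately show "map y [0..<k] \<in> lang Y" using Pinv[of k] lang_prefix by metis
  qed
  have pos: "length (w k) \<ge> 1" for k using wlen[of k] N by simp
  have cblock: "concat_inf w (S j + r) = w j ! r" if "r < length (w j)" for j r
    unfolding S_def by (rule concat_inf_block[of w r j, OF pos that])
  have errc_bd: "errc (concat_inf w) y T \<le> (T div N + 1) * M" for T
  proof -
    have sub: "{i. i < T \<and> concat_inf w i \<noteq> y i} \<subseteq> (\<Union>j\<in>{..<T div N + 1}. {S j + (length (w j) - M)..<S j + length (w j)})"
    proof
      fix i assume i: "i \<in> {i. i < T \<and> concat_inf w i \<noteq> y i}"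
      obtain j r where jr: "r < length (w j)" "i = S j + r" using block_decomp[of w, OF pos, where i=i] unfolding S_def by blast
      have r: "r \<ge> length (w j) - M"
      proof (rule ccontr)
        assume "\<not> r \<ge> length (w j) - M"
        then have "y i = concat_inf w i" using jr yblock cblock by simp
        then show False using i by simp
      qed
      have "j * N < T" using SjN[of j] jr i by simp
      then have "j < T div N + 1"
      proof -
        have m1: "T mod N < N" using N by simp
        have m2: "T = T div N * N + T mod N" by simp
        have m3: "(T div N + 1) * N = T div N * N + N" by simp
        have "T < (T div N + 1) * N" using m1 m2 m3 by linarith
        then have "j * N < (T div N + 1) * N" using \<open>j * N < T\<close> by simp
        then show ?thesis by (rule mult_less_cancel2[THEN iffD1, THEN conjunct2])
      qed
      then show "i \<in> (\<Union>j\<in>{..<T div N + 1}. {S j + (length (w j) - M)..<S j + length (w j)})"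
        using jr r by (intro UN_I[of j]) auto
    qed
    have "errc (concat_inf w) y T \<le> card (\<Union>j\<in>{..<T div N + 1}. {S j + (length (w j) - M)..<S j + length (w j)})"
      unfolding errc_def by (rule card_mono[OF _ sub]) simp
    also have "\<dots> \<le> (\<Sum>j\<in>{..<T div N + 1}. card {S j + (length (w j) - M)..<S j + length (w j)})"
      by (rule card_UN_le) simp
    also have "\<dots> = (\<Sum>j\<in>{..<T div N + 1}. M)"
    proof (rule sum.cong)
      fix j show "card {S j + (length (w j) - M)..<S j + length (w j)} = M"
        using wlen[of j] N by simp
    qed simp
    also have "\<dots> = (T div N + 1) * M" by simp
    finally show ?thesis .
  qed
  have "dbar (concat_inf w) y \<le> 2 * real M / real N"
  proof (rule dbar_leI)
    show "eventually (\<lambda>T. real (errc (concat_inf w) y T) / real T \<le> 2 * real M / real N) sequentially"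
      unfolding eventually_sequentially
    proof (intro exI allI impI)
      fix T assume T: "T \<ge> N"
      have Npos: "real N > 0" using N by simp
      have Tpos: "real T > 0" using T N by simp
      have "real (errc (concat_inf w) y T) \<le> (real (T div N) + 1) * real M"
        using of_nat_mono[OF errc_bd[of T], where 'a=real] by (simp add: algebra_simps)
      also have "\<dots> \<le> (real T / real N + 1) * real M"
        by (intro mult_right_mono) (simp_all add: of_nat_div_le_of_nat)
      finally have e: "real (errc (concat_inf w) y T) \<le> (real T / real N + 1) * real M" .
      have "real (errc (concat_inf w) y T) / real T \<le> (real T / real N + 1) * real M / real T"
        using e Tpos by (simp add: divide_right_mono)
      also have "\<dots> = real M / real N + real M / real T" using Tpos Npos by (simp add: field_simps)
      also have "real M / real T \<le> real M / real N" using T Npos by (intro divide_left_mono) simp_all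
      finally show "real (errc (concat_inf w) y T) / real T \<le> 2 * real M / real N" by simp
    qed
  qed
  then show ?thesis using yY by blast
qed



lemma i_imp_shadow:
  fixes X :: "(nat \<Rightarrow> 'a::finite) set"
  assumes X: "shift_space X" and Xs: "\<forall>n. sofic (Xs n) \<and> top_mixing (Xs n)" "X = (\<Inter>n. Xs n)"
    and lim: "(\<lambda>n. dbarH X (Xs n)) \<longlonglongrightarrow> 0"
  shows "dbar_shadowing X"
  unfolding dbar_shadowing_def
proof (intro allI impI)
  fix e :: real assume e: "e > 0"
  obtain n0 where n0: "\<And>n. n \<ge> n0 \<Longrightarrow> norm (dbarH X (Xs n) - 0) < e / 2"
    using LIMSEQ_D[OF lim, of "e / 2"] e by auto
  define Y where "Y = Xs n0"
  have dH: "dbarH X Y < e / 2" using n0[of n0] unfolding Y_def by simp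
  have Ysof: "sofic Y" and Ymix: "top_mixing Y" using Xs(1) unfolding Y_def by auto
  have Y: "shift_space Y" using Ysof unfolding sofic_def by blast
  have XY: "X \<subseteq> Y" using Xs(2) unfolding Y_def by blast
  have Xne: "X \<noteq> {}" using X unfolding shift_space_def by blast
  obtain M where M: "\<forall>u\<in>lang Y. \<forall>v\<in>lang Y. \<forall>m\<ge>M. \<exists>g. length g = m \<and> u @ g @ v \<in> lang Y"
    using sofic_spec[OF Ysof Ymix] by blast
  define N where "N = M + 1 + nat \<lceil>4 * real M / e\<rceil>"
  have N1: "N \<ge> M + 1" unfolding N_def by simp
  have NM: "2 * real M / real N < e / 2"
  proof -
    have "real N \<ge> real M + 1 + 4 * real M / e" unfolding N_def by linarith
    then have "real N > 4 * real M / e" by simp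
    then have "e * real N > 4 * real M" using e by (simp add: divide_less_eq mult.commute)
    moreover have "real N > 0" using N1 by simp
    ultimately show ?thesis by (simp add: divide_less_eq field_simps)
  qed
  have "\<forall>w :: nat \<Rightarrow> 'a list. (\<forall>j. w j \<in> lang X \<and> length (w j) \<ge> N) \<longrightarrow> (\<exists>x'\<in>X. dbar (concat_inf w) x' < e)"
  proof (intro allI impI)
    fix w :: "nat \<Rightarrow> 'a list" assume w: "\<forall>j. w j \<in> lang X \<and> length (w j) \<ge> N"
    have wl: "w j \<in> lang Y" for j using w lang_mono[OF XY] by blast
    have wlen: "\<And>j. length (w j) \<ge> N" using w by blast
    have "\<exists>y\<in>Y. dbar (concat_inf w) y \<le> 2 * real M / real N"
      by (rule spec_shadow[OF Y M wl wlen N1])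
    then obtain y where y: "y \<in> Y" "dbar (concat_inf w) y \<le> 2 * real M / real N" by blast
    obtain a where a: "a \<in> X" "dbar a y < e / 2" using dbarH_lessD[OF Xne y(1) dH] by blast
    have "dbar (concat_inf w) a \<le> dbar (concat_inf w) y + dbar y a" by (rule dbar_tri)
    also have "\<dots> < e" using y(2) a(2) NM dbar_sym[of y a] by linarith
    finally show "\<exists>x'\<in>X. dbar (concat_inf w) x' < e" using a(1) by blast
  qed
  moreover have "N \<ge> 1" using N1 by simp
  ultimately show "\<exists>N\<ge>1. \<forall>w :: nat \<Rightarrow> 'a list. (\<forall>j. w j \<in> lang X \<and> length (w j) \<ge> N) \<longrightarrow>
        (\<exists>x'\<in>X. dbar (concat_inf w) x' < e)" by blast
qed

theorem mainTheorem3: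
  fixes X :: "(nat \<Rightarrow> 'a::finite) set"
  assumes "shift_space X"
  shows "((\<exists>Xs :: nat \<Rightarrow> (nat \<Rightarrow> 'a) set.
             (\<forall>n. sofic (Xs n) \<and> top_mixing (Xs n)) \<and> decseq Xs \<and>
             X = (\<Inter>n. Xs n) \<and> (\<lambda>n. dbarH X (Xs n)) \<longlonglongrightarrow> 0)
          \<longleftrightarrow> (shift ` X = X \<and> dbar_shadowing X))
       \<and> ((shift ` X = X \<and> dbar_shadowing X)
          \<longleftrightarrow> (chain_mixing X \<and> dbar_approachable X))"
proof -
  let ?I = "\<exists>Xs :: nat \<Rightarrow> (nat \<Rightarrow> 'a) set.
             (\<forall>n. sofic (Xs n) \<and> top_mixing (Xs n)) \<and> decseq Xs \<and>
             X = (\<Inter>n. Xs n) \<and> (\<lambda>n. dbarH X (Xs n)) \<longlonglongrightarrow> 0"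
  have i_ii: "shift ` X = X \<and> dbar_shadowing X" if h: ?I
  proof -
    from h obtain Xs :: "nat \<Rightarrow> (nat \<Rightarrow> 'a) set" where Xs: "\<forall>n. sofic (Xs n) \<and> top_mixing (Xs n)" "decseq Xs"
      "X = (\<Inter>n. Xs n)" "(\<lambda>n. dbarH X (Xs n)) \<longlonglongrightarrow> 0" by (elim exE conjE)
    show ?thesis using i_imp_surj[OF assms Xs(1-3)] i_imp_shadow[OF assms Xs(1) Xs(3) Xs(4)] by (rule conjI)
  qed
  have ii_iii: "chain_mixing X \<and> dbar_approachable X" if "shift ` X = X \<and> dbar_shadowing X"
    using that by (intro ii_imp_iii[OF assms]) auto
  have iii_i: ?I if "chain_mixing X \<and> dbar_approachable X"
    using that by (intro iii_imp_i[OF assms]) auto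
  show ?thesis
  proof (rule conjI)
    show "?I \<longleftrightarrow> (shift ` X = X \<and> dbar_shadowing X)"
    proof (rule iffI)
      show "shift ` X = X \<and> dbar_shadowing X" if h: ?I using h by (rule i_ii)
      show ?I if h: "shift ` X = X \<and> dbar_shadowing X" by (rule iii_i[OF ii_iii[OF h]])
    qed
    show "(shift ` X = X \<and> dbar_shadowing X) \<longleftrightarrow> (chain_mixing X \<and> dbar_approachable X)"
    proof (rule iffI)
      show "chain_mixing X \<and> dbar_approachable X" if h: "shift ` X = X \<and> dbar_shadowing X" using h by (rule ii_iii)
      show "shift ` X = X \<and> dbar_shadowing X" if h: "chain_mixing X \<and> dbar_approachable X"
        by (rule i_ii[OF iii_i[OF h]])
    qed
  qed
qed


end
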